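(* Let $(\mathcal{L},\mathcal{D}(\mathcal{L}))$ be the generator of a $C_0$-contraction semigroup on a Banach space $\mathcal{X}$, $M\in\mathcal{B}(\mathcal{X})$ a contraction, and $P$ a projection with $\|M^n-P\|_\infty\le\delta^n$ for some $\delta\in(0,1)$ and all $n\in\mathbb{N}$. Assume there is $b\ge0$ such that $\|Pe^{t\mathcal{L}}(\mathbf{1}-P)\|_\infty\le tb$ and $\|(\mathbf{1}-P)e^{t\mathcal{L}}P\|_\infty\le tb$ for all $t\ge0$, and that $(P\mathcal{L}P,\mathcal{D}(\mathcal{L}P))$ is the generator of a $C_0$-semigroup. Then $e^{\tilde b}:=\sup_{s\in[0,1]}\|e^{sP\mathcal{L}P}P\|_\infty<\infty$ and for all $n\in\mathbb{N}$ and all $x\in\mathcal{D}((\mathcal{L}P)^2)$ $$\Big\|e^{nP(e^{\frac1n\mathcal{L}}-\mathbf{1})P}Px-e^{P\mathcal{L}P}Px\Big\|\le\frac{e^{\tilde b}}{2n}\big(b^2\|x\|+\|(\mathcal{L}P)^2x\|\big).$$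
   Context: $\mathcal{B}(\mathcal{X})$: bounded operators with operator norm $\|\cdot\|_\infty$; $\mathbf{1}$ the identity; contraction: norm at most $1$; projection: bounded idempotent. A $C_0$-(contraction) semigroup is a strongly continuous semigroup (of contractions), denoted $e^{t\mathcal{K}}$ by its generator $\mathcal{K}$; $e^{P\mathcal{L}P}$ means the semigroup generated by $(P\mathcal{L}P,\mathcal{D}(\mathcal{L}P))$ at time $1$. $e^{nP(e^{\frac1n\mathcal{L}}-\mathbf{1})P}$ is the exponential of a bounded operator. Domains: $\mathcal{D}(\mathcal{L}P)=\{x:Px\in\mathcal{D}(\mathcal{L})\}$, $\mathcal{D}((\mathcal{L}P)^2)=\{x\in\mathcal{D}(\mathcal{L}P):\mathcal{L}Px\in\mathcal{D}(\mathcal{L}P)\}$. *)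

theory Defs
  imports "HOL-Analysis.Analysis"
begin

definition bpow :: "('a::real_normed_vector \<Rightarrow>\<^sub>L 'a) \<Rightarrow> nat \<Rightarrow> ('a \<Rightarrow>\<^sub>L 'a)" where
  "bpow A n = ((\<lambda>B. A o\<^sub>L B) ^^ n) id_blinfun"

definition bexp :: "('a::banach \<Rightarrow>\<^sub>L 'a) \<Rightarrow> ('a \<Rightarrow>\<^sub>L 'a)" where
  "bexp A = (\<Sum>k. (1 / fact k) *\<^sub>R bpow A k)"

definition C0_semigroup :: "(real \<Rightarrow> ('a::real_normed_vector \<Rightarrow>\<^sub>L 'a)) \<Rightarrow> bool" where
  "C0_semigroup T \<longleftrightarrow>
     T 0 = id_blinfun \<and>
     (\<forall>s\<ge>0. \<forall>t\<ge>0. T (s + t) = T s o\<^sub>L T t) \<and>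
     (\<forall>x. continuous_on {0..} (\<lambda>t. T t x))"

definition C0_contraction_semigroup :: "(real \<Rightarrow> ('a::real_normed_vector \<Rightarrow>\<^sub>L 'a)) \<Rightarrow> bool" where
  "C0_contraction_semigroup T \<longleftrightarrow> C0_semigroup T \<and> (\<forall>t\<ge>0. norm (T t) \<le> 1)"

definition generator :: "(real \<Rightarrow> ('a::real_normed_vector \<Rightarrow>\<^sub>L 'a)) \<Rightarrow> ('a \<Rightarrow> 'a) \<Rightarrow> 'a set \<Rightarrow> bool" where
  "generator T L D \<longleftrightarrow>
     D = {x. \<exists>y. ((\<lambda>t. (1 / t) *\<^sub>R (T t x - x)) \<longlongrightarrow> y) (at_right 0)} \<and>
     (\<forall>x\<in>D. ((\<lambda>t. (1 / t) *\<^sub>R (T t x - x)) \<longlongrightarrow> L x) (at_right 0))"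

end

theory Submission
  imports Defs
begin
lemma dini_scalar:
  fixes \<phi> :: "real \<Rightarrow> real"
  assumes ab: "a \<le> b" and cont: "continuous_on {a..b} \<phi>"
    and step: "\<And>t e. t \<in> {a..<b} \<Longrightarrow> e > 0 \<Longrightarrow> \<exists>d>0. \<forall>s. 0 < s \<and> s < d \<longrightarrow> \<phi> (t + s) \<le> \<phi> t + e * s"
  shows "\<phi> b \<le> \<phi> a"
proof -
  have main: "\<phi> b \<le> \<phi> a + e * (b - a)" if e: "e > 0" for e
  proof -
    define F where "F = {u\<in>{a..b}. \<phi> u \<le> \<phi> a + e * (u - a)}"
    define K where "K = {t\<in>{a..b}. {a..t} \<subseteq> F}"
    have aK: "a \<in> K" using ab by (auto simp: K_def F_def)
    have Kb: "\<And>t. t \<in> K \<Longrightarrow> t \<le> b" by (auto simp: K_def)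
    define c where "c = Sup K"
    have cge: "a \<le> c" unfolding c_def using aK Kb using Kb by (intro cSup_upper bdd_aboveI[of _ b]) auto
    have cle: "c \<le> b" unfolding c_def using aK Kb by (intro cSup_least) auto
    have below: "{a..<c} \<subseteq> F"
    proof
      fix u assume u: "u \<in> {a..<c}"
      then have "u < Sup K" by (simp add: c_def)
      then obtain t where t: "t \<in> K" "u < t" using aK less_cSupE by blast
      then show "u \<in> F" using u by (auto simp: K_def)
    qed
    have cF: "c \<in> F"
    proof (cases "a = c")
      case True then show ?thesis using ab by (simp add: F_def)
    next
      case False
      with cge have ac: "a < c" by simp
      have cl: "closed F"
      proof -
        have "continuous_on {a..b} (\<lambda>u. \<phi> u - (\<phi> a + e * (u - a)))"
          by (intro continuous_intros cont)
        then have "closed ({a..b} \<inter> (\<lambda>u. \<phi> u - (\<phi> a + e * (u - a))) -` {..0})"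
          by (intro continuous_closed_preimage) auto
        moreover have "{a..b} \<inter> (\<lambda>u. \<phi> u - (\<phi> a + e * (u - a))) -` {..0} = F"
          by (auto simp: F_def)
        ultimately show ?thesis by simp
      qed
      have "c \<in> closure {a..<c}" using ac by simp
      then show ?thesis using below cl closure_minimal by blast
    qed
    have "c = b"
    proof (rule ccontr)
      assume "c \<noteq> b" with cle have cb: "c < b" by simp
      obtain d where d: "d > 0" "\<forall>s. 0 < s \<and> s < d \<longrightarrow> \<phi> (c + s) \<le> \<phi> c + e * s"
        using step[of c e] cb cge e by auto
      define c' where "c' = c + min d (b - c) / 2"
      have cc': "c < c'" "c' \<le> b" using d cb by (auto simp: c'_def min_def field_simps)
      have "{a..c'} \<subseteq> F"
      proof
        fix u assume u: "u \<in> {a..c'}"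
        show "u \<in> F"
        proof (cases "u \<le> c")
          case True
          then show ?thesis using below cF u by (cases "u = c") auto
        next
          case False
          then have "0 < u - c" "u - c < d" using u d cb by (auto simp: c'_def min_def field_simps split: if_splits)
          then have "\<phi> u \<le> \<phi> c + e * (u - c)" using d(2)[rule_format, of "u - c"] by simp
          also have "\<dots> \<le> \<phi> a + e * (c - a) + e * (u - c)" using cF by (simp add: F_def)
          finally show ?thesis using u cc' cge by (simp add: F_def algebra_simps)
        qed
      qed
      then have "c' \<in> K" using cc' cge by (auto simp: K_def)
      then have "c' \<le> c" unfolding c_def using Kb using Kb by (intro cSup_upper bdd_aboveI[of _ b]) auto
      with cc' show False by simp
    qed
    with cF show ?thesis by (simp add: F_def)
  qed
  show ?thesis
  proof (rule field_le_epsilon)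
    fix e :: real assume "e > 0"
    show "\<phi> b \<le> \<phi> a + e"
    proof (cases "a = b")
      case True then show ?thesis using \<open>e>0\<close> by simp
    next
      case False
      then have "b - a > 0" using ab by simp
      from main[of "e / (b - a)"] this \<open>e>0\<close> show ?thesis by simp
    qed
  qed
qed

lemma dini_mvt:
  fixes f :: "real \<Rightarrow> 'a::real_normed_vector" and g :: "real \<Rightarrow> real"
  assumes ab: "a \<le> b" and cf: "continuous_on {a..b} f" and cg: "continuous_on {a..b} g"
    and step: "\<And>t e. t \<in> {a..<b} \<Longrightarrow> e > 0 \<Longrightarrow>
       \<exists>d>0. \<forall>s. 0 < s \<and> s < d \<longrightarrow> norm (f (t + s) - f t) \<le> g (t + s) - g t + e * s"
  shows "norm (f b - f a) \<le> g b - g a"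
proof -
  define \<phi> where "\<phi> t = norm (f t - f a) - (g t - g a)" for t
  have "\<phi> b \<le> \<phi> a"
  proof (rule dini_scalar[OF ab])
    show "continuous_on {a..b} \<phi>" unfolding \<phi>_def by (intro continuous_intros cf cg)
  next
    fix t e :: real assume t: "t \<in> {a..<b}" and e: "e > 0"
    obtain d where d: "d > 0" "\<forall>s. 0 < s \<and> s < d \<longrightarrow> norm (f (t + s) - f t) \<le> g (t + s) - g t + e * s"
      using step[OF t e] by auto
    show "\<exists>d>0. \<forall>s. 0 < s \<and> s < d \<longrightarrow> \<phi> (t + s) \<le> \<phi> t + e * s"
    proof (intro exI[of _ d] conjI allI impI)
      fix s assume s: "0 < s \<and> s < d"
      have "norm (f (t + s) - f a) \<le> norm (f t - f a) + norm (f (t + s) - f t)"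
        using norm_triangle_ineq[of "f t - f a" "f (t + s) - f t"] by simp
      then show "\<phi> (t + s) \<le> \<phi> t + e * s" using d(2) s unfolding \<phi>_def by force
    qed (use d in auto)
  qed
  then show ?thesis by (simp add: \<phi>_def)
qed

lemma gen_lim:
  assumes "generator U G Dom" "z \<in> Dom"
  shows "((\<lambda>t. (1 / t) *\<^sub>R (U t z - z)) \<longlongrightarrow> G z) (at_right 0)"
  using assms unfolding generator_def by auto

lemma gen_memI:
  assumes g: "generator U G Dom" and lim: "((\<lambda>t. (1 / t) *\<^sub>R (U t z - z)) \<longlongrightarrow> y) (at_right 0)"
  shows "z \<in> Dom" "G z = y"
proof -
  show zD: "z \<in> Dom" using g lim unfolding generator_def by auto
  show "G z = y" using tendsto_unique[OF _ gen_lim[OF g zD] lim] by simp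
qed

lemma gen_small:
  assumes g: "generator U G Dom" and z: "z \<in> Dom" and e: "e > 0"
  shows "\<exists>d>0. \<forall>s. 0 < s \<and> s < d \<longrightarrow> norm (U s z - z - s *\<^sub>R G z) \<le> e * s"
proof -
  have "eventually (\<lambda>t. dist ((1 / t) *\<^sub>R (U t z - z)) (G z) < e) (at_right 0)"
    using tendstoD[OF gen_lim[OF g z] e] .
  then obtain d where d: "d > 0" "\<forall>t>0. t < d \<longrightarrow> dist ((1 / t) *\<^sub>R (U t z - z)) (G z) < e"
    unfolding eventually_at_right_field by auto
  show ?thesis
  proof (intro exI[of _ d] conjI allI impI)
    fix s assume s: "0 < s \<and> s < d"
    have "U s z - z - s *\<^sub>R G z = s *\<^sub>R ((1 / s) *\<^sub>R (U s z - z) - G z)"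
      using s by (simp add: algebra_simps)
    then have "norm (U s z - z - s *\<^sub>R G z) = s * dist ((1 / s) *\<^sub>R (U s z - z)) (G z)"
      using s by (simp add: dist_norm)
    also have "\<dots> \<le> e * s"
    proof -
      have "dist ((1 / s) *\<^sub>R (U s z - z)) (G z) \<le> e" using d(2) s less_imp_le by blast
      then show ?thesis using s by (simp add: mult.commute mult_right_mono)
    qed
    finally show "norm (U s z - z - s *\<^sub>R G z) \<le> e * s" .
  qed (use d in auto)
qed

lemma sg_comm:
  assumes "C0_semigroup U" "s \<ge> 0" "t \<ge> 0"
  shows "U s (U t z) = U t (U s z)"
proof -
  have "U (s + t) = U s o\<^sub>L U t" "U (t + s) = U t o\<^sub>L U s" using assms unfolding C0_semigroup_def by auto
  then show ?thesis by (metis add.commute blinfun_apply_blinfun_compose)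
qed

lemma sg_add:
  assumes "C0_semigroup U" "s \<ge> 0" "t \<ge> 0"
  shows "U (s + t) z = U s (U t z)"
  using assms unfolding C0_semigroup_def by auto

lemma sg_zero: "C0_semigroup U \<Longrightarrow> U 0 z = z"
  unfolding C0_semigroup_def by auto

lemma sg_dom:
  assumes sg: "C0_semigroup U" and g: "generator U G Dom" and z: "z \<in> Dom" and t: "t \<ge> 0"
  shows "U t z \<in> Dom" "G (U t z) = U t (G z)"
proof -
  have "((\<lambda>s. U t ((1 / s) *\<^sub>R (U s z - z))) \<longlongrightarrow> U t (G z)) (at_right 0)"
    by (intro blinfun.tendsto[OF tendsto_const] gen_lim[OF g z])
  moreover have "eventually (\<lambda>s. U t ((1 / s) *\<^sub>R (U s z - z)) = (1 / s) *\<^sub>R (U s (U t z) - U t z)) (at_right 0)"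
    using eventually_at_right_less[of 0]
    by eventually_elim (use sg_comm[OF sg _ t] in \<open>auto simp: blinfun.scaleR_right blinfun.diff_right\<close>)
  ultimately have lim: "((\<lambda>s. (1 / s) *\<^sub>R (U s (U t z) - U t z)) \<longlongrightarrow> U t (G z)) (at_right 0)"
    using tendsto_cong by (metis (mono_tags, lifting) eventually_mono)
  show "U t z \<in> Dom" "G (U t z) = U t (G z)" using gen_memI[OF g lim] by auto
qed

lemma opnorm_le:
  assumes "norm (X :: 'a::real_normed_vector \<Rightarrow>\<^sub>L 'b::real_normed_vector) \<le> 1"
  shows "norm (X z) \<le> norm z"
proof -
  have "norm (X z) \<le> norm X * norm z" by (rule norm_blinfun)
  also have "\<dots> \<le> 1 * norm z" by (rule mult_right_mono) (use assms in auto)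
  finally show ?thesis by simp
qed

lemma sg_cont_comp:
  assumes sg: "C0_semigroup U" and nb: "\<And>t. t \<ge> 0 \<Longrightarrow> norm (U t) \<le> 1"
    and cphi: "continuous_on I \<phi>" and phi0: "\<And>r. r \<in> I \<Longrightarrow> \<phi> r \<ge> 0"
    and cv: "continuous_on I v"
  shows "continuous_on I (\<lambda>r. U (\<phi> r) (v r))"
  unfolding continuous_on_def
proof (intro ballI)
  fix r assume r: "r \<in> I"
  have c1: "continuous_on {0..} (\<lambda>t. U t (v r))" using sg unfolding C0_semigroup_def by auto
  have "continuous_on I (\<lambda>r'. U (\<phi> r') (v r))"
    by (rule continuous_on_compose2[OF c1 cphi]) (use phi0 in auto)
  then have t1: "((\<lambda>r'. U (\<phi> r') (v r)) \<longlongrightarrow> U (\<phi> r) (v r)) (at r within I)"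
    using r unfolding continuous_on_def by simp
  have t2: "((\<lambda>r'. U (\<phi> r') (v r' - v r)) \<longlongrightarrow> 0) (at r within I)"
  proof (rule Lim_null_comparison)
    show "\<forall>\<^sub>F r' in at r within I. norm (U (\<phi> r') (v r' - v r)) \<le> norm (v r' - v r)"
      unfolding eventually_at_filter
    proof (intro always_eventually allI impI)
      fix r' assume "r' \<noteq> r" "r' \<in> I"
      then have "norm (U (\<phi> r')) \<le> 1" using nb phi0 by auto
      then show "norm (U (\<phi> r') (v r' - v r)) \<le> norm (v r' - v r)"
        by (rule opnorm_le)
    qed
    have "((\<lambda>r'. v r') \<longlongrightarrow> v r) (at r within I)" using cv r unfolding continuous_on_def by simp
    then have "((\<lambda>r'. v r' - v r) \<longlongrightarrow> 0) (at r within I)" by (rule LIM_zero)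
    then show "((\<lambda>r'. norm (v r' - v r)) \<longlongrightarrow> 0) (at r within I)"
      by (rule tendsto_norm_zero)
  qed
  have "((\<lambda>r'. U (\<phi> r') (v r') ) \<longlongrightarrow> U (\<phi> r) (v r) + 0) (at r within I)"
  proof -
    have eq: "(\<lambda>r'. U (\<phi> r') (v r) + U (\<phi> r') (v r' - v r)) = (\<lambda>r'. U (\<phi> r') (v r'))"
      by (simp add: blinfun.diff_right)
    show ?thesis using tendsto_add[OF t1 t2] unfolding eq .
  qed
  then show "((\<lambda>r. U (\<phi> r) (v r)) \<longlongrightarrow> U (\<phi> r) (v r)) (at r within I)" by simp
qed

locale setting =
  fixes T S :: "real \<Rightarrow> ('a::banach \<Rightarrow>\<^sub>L 'a)"
    and L :: "'a \<Rightarrow> 'a" and D :: "'a set"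
    and P :: "'a \<Rightarrow>\<^sub>L 'a" and b :: real
  assumes T: "C0_contraction_semigroup T" and gen: "generator T L D"
    and PP: "P o\<^sub>L P = P" and Pn: "norm P \<le> 1"
    and b: "b \<ge> 0"
    and b1: "\<And>t. t \<ge> 0 \<Longrightarrow> norm (P o\<^sub>L T t o\<^sub>L (id_blinfun - P)) \<le> t * b"
    and b2: "\<And>t. t \<ge> 0 \<Longrightarrow> norm ((id_blinfun - P) o\<^sub>L T t o\<^sub>L P) \<le> t * b"
    and S: "C0_semigroup S"
    and genS: "generator S (\<lambda>x. P (L (P x))) {x. P x \<in> D}"
begin

abbreviation "A z \<equiv> P (L (P z))"
definition "V = {w. P w = w \<and> w \<in> D}"

lemma T0: "C0_semigroup T" using T unfolding C0_contraction_semigroup_def by auto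
lemma Tn: "t \<ge> 0 \<Longrightarrow> norm (T t) \<le> 1" using T unfolding C0_contraction_semigroup_def by auto


lemma Tv: "t \<ge> 0 \<Longrightarrow> norm (T t z) \<le> norm z" using Tn opnorm_le by blast
lemma Pv: "norm (P z) \<le> norm z" using Pn opnorm_le by blast
lemma PPv[simp]: "P (P z) = P z" using PP by (metis blinfun_apply_blinfun_compose)

lemma QLP_bound:
  assumes u: "P u = u" "u \<in> D"
  shows "norm (L u - P (L u)) \<le> b * norm u"
proof -
  have "((\<lambda>t. (1 / t) *\<^sub>R (T t u - u) - P ((1 / t) *\<^sub>R (T t u - u))) \<longlongrightarrow> L u - P (L u)) (at_right 0)"
    by (intro tendsto_diff blinfun.tendsto[OF tendsto_const] gen_lim[OF gen u(2)])
  then have lim: "((\<lambda>t. norm ((1 / t) *\<^sub>R (T t u - u) - P ((1 / t) *\<^sub>R (T t u - u)))) \<longlongrightarrow> norm (L u - P (L u))) (at_right 0)"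
    by (rule tendsto_norm)
  have ev: "\<forall>\<^sub>F t in at_right 0. norm ((1 / t) *\<^sub>R (T t u - u) - P ((1 / t) *\<^sub>R (T t u - u))) \<le> b * norm u"
    using eventually_at_right_less[of 0]
  proof eventually_elim
    case (elim t)
    have e1: "((id_blinfun - P) o\<^sub>L T t o\<^sub>L P) u = T t u - P (T t u)"
      using u by (simp add: blinfun.diff_left)
    have e2: "P ((1 / t) *\<^sub>R (T t u - u)) = (1 / t) *\<^sub>R (P (T t u) - u)"
      using u by (simp add: blinfun.scaleR_right blinfun.diff_right)
    have eq: "(1 / t) *\<^sub>R (T t u - u) - P ((1 / t) *\<^sub>R (T t u - u)) = (1 / t) *\<^sub>R (((id_blinfun - P) o\<^sub>L T t o\<^sub>L P) u)"
      unfolding e1 e2 by (simp add: algebra_simps)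
    have bd: "norm (((id_blinfun - P) o\<^sub>L T t o\<^sub>L P) u) \<le> t * b * norm u"
      using norm_blinfun[of "(id_blinfun - P) o\<^sub>L T t o\<^sub>L P" u] b2[of t] elim
      by (meson mult_right_mono norm_ge_zero order_trans less_imp_le)
    have "norm ((1 / t) *\<^sub>R (((id_blinfun - P) o\<^sub>L T t o\<^sub>L P) u)) = (1 / t) * norm (((id_blinfun - P) o\<^sub>L T t o\<^sub>L P) u)"
      using elim by simp
    also have "\<dots> \<le> (1 / t) * (t * b * norm u)" by (rule mult_left_mono[OF bd]) (use elim in simp)
    also have "\<dots> = b * norm u" using elim by simp
    finally show ?case unfolding eq .
  qed
  show ?thesis using tendsto_upperbound[OF lim ev] by simp
qed

lemma PTQ_bound:
  assumes z: "P z = 0" and t: "t \<ge> 0"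
  shows "norm (P (T t z)) \<le> t * b * norm z"
proof -
  have "P (T t z) = (P o\<^sub>L T t o\<^sub>L (id_blinfun - P)) z" using z by (simp add: blinfun.diff_left)
  also have "norm \<dots> \<le> t * b * norm z"
    using norm_blinfun[of "P o\<^sub>L T t o\<^sub>L (id_blinfun - P)" z] b1[OF t]
    by (meson mult_right_mono norm_ge_zero order_trans)
  finally show ?thesis .
qed

lemma S_cont: "continuous_on {0..} (\<lambda>t. S t x)" using S unfolding C0_semigroup_def by auto
lemma T_cont: "continuous_on {0..} (\<lambda>t. T t x)" using T0 unfolding C0_semigroup_def by auto

lemma VD: "w \<in> V \<Longrightarrow> w \<in> {x. P x \<in> D}" by (auto simp: V_def)

lemma S_rangeP:
  assumes w: "w \<in> V" and t: "t \<ge> 0"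
  shows "P (S t w) = S t w"
proof -
  define f where "f r = S r w - P (S r w)" for r
  have "norm (f t - f 0) \<le> 0 - 0"
  proof (rule dini_mvt[where g="\<lambda>_. 0"])
    show "continuous_on {0..t} f" unfolding f_def
      by (intro continuous_intros blinfun.continuous_on[OF continuous_on_const]
          continuous_on_subset[OF S_cont]) auto
  next
    fix r e :: real assume r: "r \<in> {0..<t}" and e: "e > 0"
    have u: "S r w \<in> {x. P x \<in> D}" using sg_dom(1)[OF S genS VD[OF w]] r by auto
    obtain d where d: "d > 0" "\<forall>s. 0 < s \<and> s < d \<longrightarrow> norm (S s (S r w) - S r w - s *\<^sub>R A (S r w)) \<le> (e/2) * s"
      using gen_small[OF genS u, of "e/2"] e by auto
    show "\<exists>d>0. \<forall>s. 0 < s \<and> s < d \<longrightarrow> norm (f (r + s) - f r) \<le> 0 - 0 + e * s"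
    proof (intro exI[of _ d] conjI allI impI)
      fix s assume s: "0 < s \<and> s < d"
      define E where "E = S s (S r w) - S r w - s *\<^sub>R A (S r w)"
      have "f (r + s) - f r = E - P E"
        unfolding f_def E_def using sg_add[OF S, of s r] s r
        by (simp add: blinfun.diff_right blinfun.add_right blinfun.scaleR_right algebra_simps)
      then have "norm (f (r + s) - f r) \<le> norm E + norm E"
        using norm_triangle_ineq4[of E "P E"] Pv[of E] by simp
      also have "\<dots> \<le> e * s" using d(2) s unfolding E_def by auto
      finally show "norm (f (r + s) - f r) \<le> 0 - 0 + e * s" by simp
    qed (use d in auto)
  qed (use t in auto)
  moreover have "f 0 = 0" using w sg_zero[OF S] by (simp add: f_def V_def)
  ultimately show ?thesis by (simp add: f_def)
qed

lemma S_V: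
  assumes w: "w \<in> V" and t: "t \<ge> 0"
  shows "S t w \<in> V"
  using S_rangeP[OF w t] sg_dom(1)[OF S genS VD[OF w] t] by (auto simp: V_def)

lemma S_contr:
  assumes w: "w \<in> V" and t: "t \<ge> 0"
  shows "norm (S t w) \<le> norm w"
proof -
  have "(\<lambda>r. norm (S r w)) t \<le> (\<lambda>r. norm (S r w)) 0"
  proof (rule dini_scalar[where \<phi>="\<lambda>r. norm (S r w)"])
    show "continuous_on {0..t} (\<lambda>r. norm (S r w))"
      by (intro continuous_intros continuous_on_subset[OF S_cont]) auto
  next
    fix r e :: real assume r: "r \<in> {0..<t}" and e: "e > 0"
    define u where "u = S r w"
    have uV: "u \<in> V" using S_V[OF w] r by (auto simp: u_def)
    then have uP: "P u = u" "u \<in> D" by (auto simp: V_def)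
    obtain d1 where d1: "d1 > 0" "\<forall>s. 0 < s \<and> s < d1 \<longrightarrow> norm (S s u - u - s *\<^sub>R A u) \<le> (e/2) * s"
      using gen_small[OF genS VD[OF uV], of "e/2"] e by auto
    obtain d2 where d2: "d2 > 0" "\<forall>s. 0 < s \<and> s < d2 \<longrightarrow> norm (T s u - u - s *\<^sub>R L u) \<le> (e/2) * s"
      using gen_small[OF gen uP(2), of "e/2"] e by auto
    show "\<exists>d>0. \<forall>s. 0 < s \<and> s < d \<longrightarrow> norm (S (r + s) w) \<le> norm (S r w) + e * s"
    proof (intro exI[of _ "min d1 d2"] conjI allI impI)
      fix s assume s: "0 < s \<and> s < min d1 d2"
      have eq: "S (r + s) w = S s u" using sg_add[OF S, of s r] s r by (simp add: u_def add.commute)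
      have "S s u = P (T s u) + (S s u - u - s *\<^sub>R A u) - P (T s u - u - s *\<^sub>R L u)"
        using uP by (simp add: blinfun.diff_right blinfun.scaleR_right)
      then have nS: "norm (S s u) = norm (P (T s u) + (S s u - u - s *\<^sub>R A u) - P (T s u - u - s *\<^sub>R L u))"
        by (rule arg_cong)
      have "norm (S s u) \<le> norm (P (T s u)) + norm (S s u - u - s *\<^sub>R A u) + norm (P (T s u - u - s *\<^sub>R L u))"
        using norm_triangle_ineq[of "P (T s u)" "S s u - u - s *\<^sub>R A u"]
          norm_triangle_ineq4[of "P (T s u) + (S s u - u - s *\<^sub>R A u)" "P (T s u - u - s *\<^sub>R L u)"]
        unfolding nS by linarith
      also have "\<dots> \<le> norm u + (e/2) * s + (e/2) * s"
      proof -
        have "norm (P (T s u)) \<le> norm u" using Pv[of "T s u"] Tv[of s u] s by linarith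
        moreover have "norm (S s u - u - s *\<^sub>R A u) \<le> (e/2) * s" using d1(2) s by simp
        moreover have "norm (P (T s u - u - s *\<^sub>R L u)) \<le> (e/2) * s"
          using d2(2)[rule_format, of s] s Pv[of "T s u - u - s *\<^sub>R L u"] by linarith
        ultimately show ?thesis by linarith
      qed
      finally show "norm (S (r + s) w) \<le> norm (S r w) + e * s" by (simp add: eq u_def)
    qed (use d1 d2 in auto)
  qed (use t in auto)
  then show ?thesis using sg_zero[OF S] by simp
qed

end

context setting begin

lemma D_lin:
  assumes x: "x \<in> D" and y: "y \<in> D"
  shows "a *\<^sub>R x + c *\<^sub>R y \<in> D" "L (a *\<^sub>R x + c *\<^sub>R y) = a *\<^sub>R L x + c *\<^sub>R L y"
proof -
  have "((\<lambda>t. a *\<^sub>R ((1 / t) *\<^sub>R (T t x - x)) + c *\<^sub>R ((1 / t) *\<^sub>R (T t y - y))) \<longlongrightarrow> a *\<^sub>R L x + c *\<^sub>R L y) (at_right 0)"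
    by (intro tendsto_intros gen_lim[OF gen x] gen_lim[OF gen y])
  moreover have "(\<lambda>t. a *\<^sub>R ((1 / t) *\<^sub>R (T t x - x)) + c *\<^sub>R ((1 / t) *\<^sub>R (T t y - y))) =
      (\<lambda>t. (1 / t) *\<^sub>R (T t (a *\<^sub>R x + c *\<^sub>R y) - (a *\<^sub>R x + c *\<^sub>R y)))"
    by (auto simp: blinfun.add_right blinfun.scaleR_right algebra_simps)
  ultimately have lim: "((\<lambda>t. (1 / t) *\<^sub>R (T t (a *\<^sub>R x + c *\<^sub>R y) - (a *\<^sub>R x + c *\<^sub>R y))) \<longlongrightarrow> a *\<^sub>R L x + c *\<^sub>R L y) (at_right 0)"
    by simp
  show "a *\<^sub>R x + c *\<^sub>R y \<in> D" "L (a *\<^sub>R x + c *\<^sub>R y) = a *\<^sub>R L x + c *\<^sub>R L y"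
    using gen_memI[OF gen lim] by auto
qed

lemma V_lin:
  assumes x: "x \<in> V" and y: "y \<in> V"
  shows "a *\<^sub>R x + c *\<^sub>R y \<in> V" "A (a *\<^sub>R x + c *\<^sub>R y) = a *\<^sub>R A x + c *\<^sub>R A y"
proof -
  have xx: "P x = x" "x \<in> D" and yy: "P y = y" "y \<in> D" using x y by (auto simp: V_def)
  show "a *\<^sub>R x + c *\<^sub>R y \<in> V"
    using D_lin(1)[OF xx(2) yy(2)] xx yy by (auto simp: V_def blinfun.add_right blinfun.scaleR_right)
  have "P (a *\<^sub>R x + c *\<^sub>R y) = a *\<^sub>R x + c *\<^sub>R y" using xx yy by (simp add: blinfun.add_right blinfun.scaleR_right)
  then show "A (a *\<^sub>R x + c *\<^sub>R y) = a *\<^sub>R A x + c *\<^sub>R A y"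
    using D_lin(2)[OF xx(2) yy(2)] xx yy by (simp add: blinfun.add_right blinfun.scaleR_right)
qed

lemma V_diff: "x \<in> V \<Longrightarrow> y \<in> V \<Longrightarrow> x - y \<in> V \<and> A (x - y) = A x - A y"
  using V_lin[of x y 1 "-1"] by simp

lemma V_scale: "x \<in> V \<Longrightarrow> a *\<^sub>R x \<in> V \<and> A (a *\<^sub>R x) = a *\<^sub>R A x"
  using V_lin[of x x a 0] by simp

lemma A_S: "x \<in> V \<Longrightarrow> t \<ge> 0 \<Longrightarrow> A (S t x) = S t (A x)"
  using sg_dom(2)[OF S genS VD] by blast

lemma CS_bound:
  assumes w: "w \<in> V" and h: "h \<ge> 0"
  shows "norm (P (T h w) - S h w) \<le> b\<^sup>2 * h\<^sup>2 / 2 * norm w"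
proof -
  define f where "f r = P (T (h - r) (S r w))" for r
  define g where "g r = b\<^sup>2 * norm w * (h * r - r\<^sup>2 / 2)" for r
  have "norm (f h - f 0) \<le> g h - g 0"
  proof (rule dini_mvt[OF h])
    have "continuous_on {0..h} (\<lambda>r. T (h - r) (S r w))"
      by (rule sg_cont_comp[OF T0 Tn]) (auto intro!: continuous_intros continuous_on_subset[OF S_cont])
    then show "continuous_on {0..h} f" unfolding f_def
      by (intro blinfun.continuous_on[OF continuous_on_const])
    show "continuous_on {0..h} g" unfolding g_def by (intro continuous_intros) auto
  next
    fix r e :: real assume r: "r \<in> {0..<h}" and e: "e > 0"
    define u where "u = S r w"
    have uV: "u \<in> V" using S_V[OF w] r by (auto simp: u_def)
    then have uP: "P u = u" "u \<in> D" by (auto simp: V_def)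
    have nu: "norm u \<le> norm w" using S_contr[OF w] r by (auto simp: u_def)
    obtain d1 where d1: "d1 > 0" "\<forall>s. 0 < s \<and> s < d1 \<longrightarrow> norm (S s u - u - s *\<^sub>R A u) \<le> (e/2) * s"
      using gen_small[OF genS VD[OF uV], of "e/2"] e by auto
    obtain d2 where d2: "d2 > 0" "\<forall>s. 0 < s \<and> s < d2 \<longrightarrow> norm (T s u - u - s *\<^sub>R L u) \<le> (e/2) * s"
      using gen_small[OF gen uP(2), of "e/2"] e by auto
    show "\<exists>d>0. \<forall>s. 0 < s \<and> s < d \<longrightarrow> norm (f (r + s) - f r) \<le> g (r + s) - g r + e * s"
    proof (intro exI[of _ "min (min d1 d2) (h - r)"] conjI allI impI)
      fix s assume s: "0 < s \<and> s < min (min d1 d2) (h - r)"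
      define \<tau> where "\<tau> = h - r - s"
      have \<tau>: "\<tau> \<ge> 0" using s by (simp add: \<tau>_def)
      define E1 where "E1 = S s u - u - s *\<^sub>R A u"
      define E2 where "E2 = T s u - u - s *\<^sub>R L u"
      define z where "z = L u - P (L u)"
      have f1: "f (r + s) = P (T \<tau> (S s u))"
        using sg_add[OF S, of s r] s r by (simp add: f_def u_def \<tau>_def diff_diff_eq add.commute)
      have f2: "f r = P (T \<tau> (T s u))"
        using sg_add[OF T0, of \<tau> s] s r \<tau> by (simp add: f_def u_def \<tau>_def)
      have eqE: "S s u - T s u = E1 - E2 - s *\<^sub>R z"
        using uP by (simp add: E1_def E2_def z_def algebra_simps)
      have "f (r + s) - f r = P (T \<tau> (S s u - T s u))"
        unfolding f1 f2 by (simp add: blinfun.diff_right)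
      also have "\<dots> = P (T \<tau> E1) - P (T \<tau> E2) - s *\<^sub>R P (T \<tau> z)"
        unfolding eqE by (simp add: blinfun.diff_right blinfun.scaleR_right)
      finally have fd: "f (r + s) - f r = P (T \<tau> E1) - P (T \<tau> E2) - s *\<^sub>R P (T \<tau> z)" .
      then have "norm (f (r + s) - f r) \<le> norm (P (T \<tau> E1)) + norm (P (T \<tau> E2)) + s * norm (P (T \<tau> z))"
      proof -
        have "norm (P (T \<tau> E1) - P (T \<tau> E2) - s *\<^sub>R P (T \<tau> z)) \<le> norm (P (T \<tau> E1) - P (T \<tau> E2)) + norm (s *\<^sub>R P (T \<tau> z))"
          by (rule norm_triangle_ineq4)
        moreover have "norm (P (T \<tau> E1) - P (T \<tau> E2)) \<le> norm (P (T \<tau> E1)) + norm (P (T \<tau> E2))"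
          by (rule norm_triangle_ineq4)
        moreover have "norm (s *\<^sub>R P (T \<tau> z)) = s * norm (P (T \<tau> z))" using s by simp
        ultimately show ?thesis unfolding fd by linarith
      qed
      also have "\<dots> \<le> (e/2) * s + (e/2) * s + s * (\<tau> * b * (b * norm w))"
      proof -
        have "norm (P (T \<tau> E1)) \<le> (e/2) * s"
          using Pv[of "T \<tau> E1"] Tv[OF \<tau>, of E1] d1(2)[rule_format, of s] s by (simp add: E1_def)
        moreover have "norm (P (T \<tau> E2)) \<le> (e/2) * s"
          using Pv[of "T \<tau> E2"] Tv[OF \<tau>, of E2] d2(2)[rule_format, of s] s by (simp add: E2_def)
        moreover have "norm (P (T \<tau> z)) \<le> \<tau> * b * (b * norm w)"
        proof -
          have "P z = 0" by (simp add: z_def blinfun.diff_right)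
          then have "norm (P (T \<tau> z)) \<le> \<tau> * b * norm z" using PTQ_bound \<tau> by blast
          also have "\<dots> \<le> \<tau> * b * (b * norm w)"
          proof (rule mult_left_mono)
            show "norm z \<le> b * norm w" using QLP_bound[OF uP] nu b unfolding z_def
              by (meson mult_left_mono order_trans)
          qed (use \<tau> b in simp)
          finally show ?thesis .
        qed
        moreover have "s * norm (P (T \<tau> z)) \<le> s * (\<tau> * b * (b * norm w))"
          by (rule mult_left_mono) (use calculation s in auto)
        ultimately show ?thesis by linarith
      qed
      also have "\<dots> \<le> g (r + s) - g r + e * s"
      proof -
        have "s * \<tau> \<le> h * s - r * s - s\<^sup>2 / 2" using s
          by (simp add: \<tau>_def power2_eq_square algebra_simps)
        then have "b\<^sup>2 * norm w * (s * \<tau>) \<le> b\<^sup>2 * norm w * (h * s - r * s - s\<^sup>2 / 2)"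
          by (rule mult_left_mono) simp
        moreover have "g (r + s) - g r = b\<^sup>2 * norm w * (h * s - r * s - s\<^sup>2 / 2)"
          by (simp add: g_def power2_eq_square algebra_simps)
        ultimately show ?thesis by (simp add: power2_eq_square algebra_simps)
      qed
      finally show "norm (f (r + s) - f r) \<le> g (r + s) - g r + e * s" .
    qed (use d1 d2 r in auto)
  qed
  moreover have "f h = S h w" using S_rangeP[OF w h] by (simp add: f_def sg_zero[OF T0])
  moreover have "f 0 = P (T h w)" by (simp add: f_def sg_zero[OF S])
  moreover have "g h - g 0 = b\<^sup>2 * h\<^sup>2 / 2 * norm w" by (simp add: g_def power2_eq_square field_simps)
  ultimately show ?thesis by (simp add: norm_minus_commute)
qed

end

context setting begin

lemma S_contr_A:
  assumes z: "z \<in> V" and r: "r \<ge> 0"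
  shows "norm (S r (A z)) \<le> norm (A z)"
proof -
  have l0: "((\<lambda>t. (1 / t) *\<^sub>R (S t z - z)) \<longlongrightarrow> A z) (at_right 0)" by (rule gen_lim[OF genS VD[OF z]])
  have l1: "((\<lambda>t. norm (S r ((1 / t) *\<^sub>R (S t z - z)))) \<longlongrightarrow> norm (S r (A z))) (at_right 0)"
    by (intro tendsto_norm blinfun.tendsto[OF tendsto_const] l0)
  have l2: "((\<lambda>t. norm ((1 / t) *\<^sub>R (S t z - z))) \<longlongrightarrow> norm (A z)) (at_right 0)"
    by (intro tendsto_norm l0)
  have ev: "\<forall>\<^sub>F t in at_right 0. norm (S r ((1 / t) *\<^sub>R (S t z - z))) \<le> norm ((1 / t) *\<^sub>R (S t z - z))"
    using eventually_at_right_less[of 0]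
  proof eventually_elim
    case (elim t)
    have "(1 / t) *\<^sub>R (S t z - z) \<in> V"
      using V_scale V_diff S_V[OF z] elim z by auto
    then show ?case using S_contr r by blast
  qed
  show ?thesis using tendsto_le[OF _ l2 l1 ev] by simp
qed

lemma S_inc:
  assumes w: "w \<in> V" and h: "h \<ge> 0" and c: "\<And>t. t \<ge> 0 \<Longrightarrow> norm (S t (A w)) \<le> norm (A w)"
  shows "norm (S h w - w) \<le> h * norm (A w)"
proof -
  have "norm ((\<lambda>r. S r w) h - (\<lambda>r. S r w) 0) \<le> (\<lambda>r. r * norm (A w)) h - (\<lambda>r. r * norm (A w)) 0"
  proof (rule dini_mvt[OF h])
    show "continuous_on {0..h} (\<lambda>r. S r w)" by (rule continuous_on_subset[OF S_cont]) auto
    show "continuous_on {0..h} (\<lambda>r. r * norm (A w))" by (intro continuous_intros)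
  next
    fix r e :: real assume r: "r \<in> {0..<h}" and e: "e > 0"
    define u where "u = S r w"
    have uV: "u \<in> V" using S_V[OF w] r by (auto simp: u_def)
    have Au: "A u = S r (A w)" using A_S[OF w] r by (auto simp: u_def)
    obtain d where d: "d > 0" "\<forall>s. 0 < s \<and> s < d \<longrightarrow> norm (S s u - u - s *\<^sub>R A u) \<le> e * s"
      using gen_small[OF genS VD[OF uV] e] by auto
    show "\<exists>d>0. \<forall>s. 0 < s \<and> s < d \<longrightarrow> norm (S (r + s) w - S r w) \<le> (r + s) * norm (A w) - r * norm (A w) + e * s"
    proof (intro exI[of _ d] conjI allI impI)
      fix s assume s: "0 < s \<and> s < d"
      have eq: "S (r + s) w - S r w = (S s u - u - s *\<^sub>R A u) + s *\<^sub>R A u"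
        using sg_add[OF S, of s r] s r by (simp add: u_def add.commute)
      have "norm (S (r + s) w - S r w) \<le> norm (S s u - u - s *\<^sub>R A u) + norm (s *\<^sub>R A u)"
        unfolding eq by (rule norm_triangle_ineq)
      moreover have "norm (s *\<^sub>R A u) \<le> s * norm (A w)"
        using c[of r] r s by (simp add: Au mult_left_mono)
      moreover have "norm (S s u - u - s *\<^sub>R A u) \<le> e * s" using d(2) s by blast
      ultimately show "norm (S (r + s) w - S r w) \<le> (r + s) * norm (A w) - r * norm (A w) + e * s"
        by (simp add: algebra_simps)
    qed (use d in auto)
  qed
  then show ?thesis using sg_zero[OF S] by simp
qed

lemma S_second:
  assumes y: "y \<in> V" and Ay: "A y \<in> V" and h: "h \<ge> 0"
  shows "norm (S h (S h y) - 2 *\<^sub>R S h y + y) \<le> h\<^sup>2 * norm (A (A y))"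
proof -
  define v where "v = S h y - y"
  have vV: "v \<in> V" and Av: "A v = S h (A y) - A y"
    using V_diff[OF S_V[OF y h] y] A_S[OF y h] by (auto simp: v_def)
  have AvV: "A v \<in> V" unfolding Av using V_diff[OF S_V[OF Ay h] Ay] by auto
  have "norm (S h v - v) \<le> h * norm (A v)"
    by (rule S_inc[OF vV h]) (use S_contr[OF AvV] in auto)
  also have "\<dots> \<le> h * (h * norm (A (A y)))"
  proof (rule mult_left_mono)
    show "norm (A v) \<le> h * norm (A (A y))" unfolding Av
      by (rule S_inc[OF Ay h]) (use S_contr_A[OF Ay] in auto)
  qed (use h in auto)
  finally show ?thesis
    by (simp add: v_def blinfun.diff_right power2_eq_square algebra_simps scaleR_2)
qed

definition "C h = P o\<^sub>L T h o\<^sub>L P"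

lemma C_norm: "h \<ge> 0 \<Longrightarrow> norm (C h) \<le> 1"
proof -
  assume h: "h \<ge> 0"
  have "norm (C h) \<le> norm (P o\<^sub>L T h) * norm P" unfolding C_def by (rule norm_blinfun_compose)
  also have "\<dots> \<le> (norm P * norm (T h)) * norm P"
    by (intro mult_right_mono norm_blinfun_compose) auto
  also have "\<dots> \<le> (1 * 1) * 1"
    using Pn Tn[OF h] by (intro mult_mono) auto
  finally show ?thesis by simp
qed

lemma bpow_Suc: "bpow X (Suc k) = X o\<^sub>L bpow X k"
  by (simp add: bpow_def)

lemma bpow_0: "bpow X 0 = id_blinfun"
  by (simp add: bpow_def)

lemma C_iter:
  assumes y: "y \<in> V" and h: "h \<ge> 0"
  shows "norm (bpow (C h) k y - S (real k * h) y) \<le> real k * (b\<^sup>2 * h\<^sup>2 / 2) * norm y"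
proof (induction k)
  case 0
  then show ?case by (simp add: bpow_0 sg_zero[OF S])
next
  case (Suc k)
  define w where "w = S (real k * h) y"
  have wV: "w \<in> V" using S_V[OF y] h by (simp add: w_def)
  have nw: "norm w \<le> norm y" using S_contr[OF y] h by (simp add: w_def)
  have e: "S (real (Suc k) * h) = S (h + real k * h)" by (simp add: algebra_simps)
  have Sw: "S (real (Suc k) * h) y = S h w"
    unfolding e w_def using sg_add[OF S, of h "real k * h" y] h by simp
  have Cw: "C h w = P (T h w)" using wV by (simp add: C_def V_def)
  have "bpow (C h) (Suc k) y - S (real (Suc k) * h) y = C h (bpow (C h) k y - w) + (P (T h w) - S h w)"
    unfolding Sw by (simp add: bpow_Suc Cw[symmetric] blinfun.diff_right)
  then have "norm (bpow (C h) (Suc k) y - S (real (Suc k) * h) y) \<le> norm (C h (bpow (C h) k y - w)) + norm (P (T h w) - S h w)"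
    by (metis norm_triangle_ineq)
  also have "\<dots> \<le> real k * (b\<^sup>2 * h\<^sup>2 / 2) * norm y + b\<^sup>2 * h\<^sup>2 / 2 * norm y"
  proof (rule add_mono)
    show "norm (C h (bpow (C h) k y - w)) \<le> real k * (b\<^sup>2 * h\<^sup>2 / 2) * norm y"
      using opnorm_le[OF C_norm[OF h]] Suc.IH unfolding w_def by (meson order_trans)
    show "norm (P (T h w) - S h w) \<le> b\<^sup>2 * h\<^sup>2 / 2 * norm y"
      using CS_bound[OF wV h] nw by (meson mult_left_mono order_trans zero_le_power2 divide_nonneg_pos
          mult_nonneg_nonneg zero_less_numeral)
  qed
  finally show ?case by (simp add: algebra_simps)
qed

end

lemma Cauchy_product_sums_scaleR:
  fixes a :: "nat \<Rightarrow> 'a::banach" and b :: "nat \<Rightarrow> real"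
  assumes a: "summable (\<lambda>k. norm (a k))"
    and b: "summable (\<lambda>k. norm (b k))"
  shows "(\<lambda>k. \<Sum>i\<le>k. b (k - i) *\<^sub>R a i) sums ((\<Sum>k. b k) *\<^sub>R (\<Sum>k. a k))"
proof -
  let ?S1 = "\<lambda>n::nat. {..<n} \<times> {..<n}"
  let ?S2 = "\<lambda>n::nat. {(i,j). i + j < n}"
  have S1_mono: "\<And>m n. m \<le> n \<Longrightarrow> ?S1 m \<subseteq> ?S1 n" by auto
  have S2_le_S1: "\<And>n. ?S2 n \<subseteq> ?S1 n" by auto
  have S1_le_S2: "\<And>n. ?S1 (n div 2) \<subseteq> ?S2 n" by auto
  have finite_S1: "\<And>n. finite (?S1 n)" by simp
  with S2_le_S1 have finite_S2: "\<And>n. finite (?S2 n)" by (rule finite_subset)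
  let ?g = "\<lambda>(i,j). b j *\<^sub>R a i"
  let ?f = "\<lambda>(i,j). norm (a i) * norm (b j)"
  have f_nonneg: "\<And>x. 0 \<le> ?f x" by auto
  then have norm_sum_f: "\<And>A. norm (sum ?f A) = sum ?f A"
    unfolding real_norm_def
    by (simp only: abs_of_nonneg sum_nonneg [rule_format])
  have prod_eq: "\<And>n. (\<Sum>k<n. b k) *\<^sub>R (\<Sum>k<n. a k) = sum ?g (?S1 n)"
    by (simp add: scaleR_sum_left scaleR_sum_right sum.cartesian_product sum.swap[of _ "{..<_}"])
  have "(\<lambda>n. (\<Sum>k<n. b k) *\<^sub>R (\<Sum>k<n. a k)) \<longlonglongrightarrow> (\<Sum>k. b k) *\<^sub>R (\<Sum>k. a k)"
    by (intro tendsto_scaleR summable_LIMSEQ summable_norm_cancel [OF a] summable_norm_cancel [OF b])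
  then have 1: "(\<lambda>n. sum ?g (?S1 n)) \<longlonglongrightarrow> (\<Sum>k. b k) *\<^sub>R (\<Sum>k. a k)"
    by (simp only: prod_eq)
  have "(\<lambda>n. (\<Sum>k<n. norm (a k)) * (\<Sum>k<n. norm (b k))) \<longlonglongrightarrow> (\<Sum>k. norm (a k)) * (\<Sum>k. norm (b k))"
    using a b by (intro tendsto_mult summable_LIMSEQ)
  then have "(\<lambda>n. sum ?f (?S1 n)) \<longlonglongrightarrow> (\<Sum>k. norm (a k)) * (\<Sum>k. norm (b k))"
    by (simp only: sum_product sum.Sigma [rule_format] finite_lessThan)
  then have "convergent (\<lambda>n. sum ?f (?S1 n))"
    by (rule convergentI)
  then have Cauchy: "Cauchy (\<lambda>n. sum ?f (?S1 n))"
    by (rule convergent_Cauchy)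
  have "Zfun (\<lambda>n. sum ?f (?S1 n - ?S2 n)) sequentially"
  proof (rule ZfunI, simp only: eventually_sequentially norm_sum_f)
    fix r :: real
    assume r: "0 < r"
    from CauchyD [OF Cauchy r] obtain N
      where "\<forall>m\<ge>N. \<forall>n\<ge>N. norm (sum ?f (?S1 m) - sum ?f (?S1 n)) < r" ..
    then have "\<And>m n. N \<le> n \<Longrightarrow> n \<le> m \<Longrightarrow> norm (sum ?f (?S1 m - ?S1 n)) < r"
      by (simp only: sum_diff finite_S1 S1_mono)
    then have N: "\<And>m n. N \<le> n \<Longrightarrow> n \<le> m \<Longrightarrow> sum ?f (?S1 m - ?S1 n) < r"
      by (simp only: norm_sum_f)
    show "\<exists>N. \<forall>n\<ge>N. sum ?f (?S1 n - ?S2 n) < r"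
    proof (intro exI allI impI)
      fix n
      assume "2 * N \<le> n"
      then have n: "N \<le> n div 2" by simp
      have "sum ?f (?S1 n - ?S2 n) \<le> sum ?f (?S1 n - ?S1 (n div 2))"
        by (intro sum_mono2 finite_Diff finite_S1 f_nonneg Diff_mono subset_refl S1_le_S2)
      also have "\<dots> < r"
        using n div_le_dividend by (rule N)
      finally show "sum ?f (?S1 n - ?S2 n) < r" .
    qed
  qed
  then have "Zfun (\<lambda>n. sum ?g (?S1 n - ?S2 n)) sequentially"
    apply (rule Zfun_le [rule_format])
    apply (simp only: norm_sum_f)
    apply (rule order_trans [OF norm_sum sum_mono])
    apply (auto simp add: mult.commute)
    done
  then have 2: "(\<lambda>n. sum ?g (?S1 n) - sum ?g (?S2 n)) \<longlonglongrightarrow> 0"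
    unfolding tendsto_Zfun_iff diff_0_right
    by (simp only: sum_diff finite_S1 S2_le_S1)
  with 1 have "(\<lambda>n. sum ?g (?S2 n)) \<longlonglongrightarrow> (\<Sum>k. b k) *\<^sub>R (\<Sum>k. a k)"
    by (rule Lim_transform2)
  then show ?thesis
    by (simp only: sums_def sum.triangle_reindex)
qed

lemma poisson0: "(\<lambda>k. \<mu>^k / fact k) sums exp (\<mu>::real)"
  using exp_converges[of \<mu>] by (simp add: divide_inverse mult.commute)

lemma poisson1: "(\<lambda>k. real k * (\<mu>^k / fact k)) sums (\<mu> * exp (\<mu>::real))"
proof -
  have "(\<lambda>k. \<mu> * (\<mu>^k / fact k)) sums (\<mu> * exp \<mu>)" by (rule sums_mult[OF poisson0])
  moreover have "\<And>k. real (Suc k) * (\<mu>^Suc k / fact (Suc k)) = \<mu> * (\<mu>^k / fact k)"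
  proof -
    fix k
    have "(0::real) < fact k + fact k * real k" by (intro add_pos_nonneg) auto
    then show "real (Suc k) * (\<mu>^Suc k / fact (Suc k)) = \<mu> * (\<mu>^k / fact k)"
      by (simp add: field_simps)
  qed
  ultimately have "(\<lambda>k. real (Suc k) * (\<mu>^Suc k / fact (Suc k))) sums (\<mu> * exp \<mu>)" by presburger
  then show ?thesis by (subst (asm) sums_Suc_iff) simp
qed

lemma poisson2: "(\<lambda>k. real k * (real k - 1) * (\<mu>^k / fact k)) sums (\<mu>^2 * exp (\<mu>::real))"
proof -
  have "(\<lambda>k. \<mu> * (real k * (\<mu>^k / fact k))) sums (\<mu> * (\<mu> * exp \<mu>))" by (rule sums_mult[OF poisson1])
  moreover have "\<And>k. real (Suc k) * (real (Suc k) - 1) * (\<mu>^Suc k / fact (Suc k)) = \<mu> * (real k * (\<mu>^k / fact k))"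
  proof -
    fix k
    have "(0::real) < fact k + fact k * real k" by (intro add_pos_nonneg) auto
    then show "real (Suc k) * (real (Suc k) - 1) * (\<mu>^Suc k / fact (Suc k)) = \<mu> * (real k * (\<mu>^k / fact k))"
      by (simp add: field_simps)
  qed
  ultimately have "(\<lambda>k. real (Suc k) * (real (Suc k) - 1) * (\<mu>^Suc k / fact (Suc k))) sums (\<mu> * (\<mu> * exp \<mu>))"
    by presburger
  then have "(\<lambda>k. real (Suc k) * (real (Suc k) - 1) * (\<mu>^Suc k / fact (Suc k))) sums (\<mu>^2 * exp \<mu>)"
    by (simp add: power2_eq_square mult.assoc)
  then show ?thesis by (subst (asm) sums_Suc_iff) simp
qed

definition pois :: "real \<Rightarrow> nat \<Rightarrow> real" where "pois \<mu> k = exp (- \<mu>) * (\<mu>^k / fact k)"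

lemma pois_nonneg: "\<mu> \<ge> 0 \<Longrightarrow> pois \<mu> k \<ge> 0" by (simp add: pois_def)

lemma pois_sums0: "pois \<mu> sums 1"
proof -
  have "(\<lambda>k. exp (-\<mu>) * (\<mu>^k / fact k)) sums (exp (-\<mu>) * exp \<mu>)" by (rule sums_mult[OF poisson0])
  moreover have "exp (-\<mu>) * exp \<mu> = 1" by (simp add: exp_minus_inverse mult.commute)
  ultimately show ?thesis unfolding pois_def[abs_def] by simp
qed

lemma pois_sums1: "(\<lambda>k. real k * pois \<mu> k) sums \<mu>"
proof -
  have "(\<lambda>k. exp (-\<mu>) * (real k * (\<mu>^k / fact k))) sums (exp (-\<mu>) * (\<mu> * exp \<mu>))" by (rule sums_mult[OF poisson1])
  moreover have "exp (-\<mu>) * (\<mu> * exp \<mu>) = \<mu>" by (simp add: exp_minus_inverse mult.commute mult.left_commute)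
  moreover have "(\<lambda>k. exp (-\<mu>) * (real k * (\<mu>^k / fact k))) = (\<lambda>k. real k * pois \<mu> k)"
    by (simp add: pois_def mult_ac)
  ultimately show ?thesis by simp
qed

lemma pois_sums2: "(\<lambda>k. real k * (real k - 1) * pois \<mu> k) sums \<mu>^2"
proof -
  have "(\<lambda>k. exp (-\<mu>) * (real k * (real k - 1) * (\<mu>^k / fact k))) sums (exp (-\<mu>) * (\<mu>^2 * exp \<mu>))" by (rule sums_mult[OF poisson2])
  moreover have "exp (-\<mu>) * (\<mu>^2 * exp \<mu>) = \<mu>^2" by (simp add: exp_minus_inverse mult.commute mult.left_commute)
  moreover have "(\<lambda>k. exp (-\<mu>) * (real k * (real k - 1) * (\<mu>^k / fact k))) = (\<lambda>k. real k * (real k - 1) * pois \<mu> k)"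
    by (simp add: pois_def mult_ac)
  ultimately show ?thesis by simp
qed

lemma pois_sums_c: "(\<lambda>k. ((real k - \<mu>)^2 - (real k - \<mu>)) * pois \<mu> k) sums \<mu>"
proof -
  have "(\<lambda>k. real k * (real k - 1) * pois \<mu> k - (2 * \<mu>) * (real k * pois \<mu> k) + (\<mu>^2 + \<mu>) * pois \<mu> k) sums
        (\<mu>^2 - (2 * \<mu>) * \<mu> + (\<mu>^2 + \<mu>) * 1)"
    by (intro sums_add sums_diff sums_mult pois_sums0 pois_sums1 pois_sums2)
  moreover have "\<And>k. real k * (real k - 1) * pois \<mu> k - (2 * \<mu>) * (real k * pois \<mu> k) + (\<mu>^2 + \<mu>) * pois \<mu> k
      = ((real k - \<mu>)^2 - (real k - \<mu>)) * pois \<mu> k"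
    by (simp add: power2_eq_square algebra_simps)
  ultimately show ?thesis by (simp add: power2_eq_square algebra_simps)
qed

lemma pois_sums_lin: "(\<lambda>k. (real k - \<mu>) * pois \<mu> k) sums 0"
proof -
  have "(\<lambda>k. real k * pois \<mu> k - \<mu> * pois \<mu> k) sums (\<mu> - \<mu> * 1)"
    by (intro sums_diff sums_mult pois_sums0 pois_sums1)
  then show ?thesis by (simp add: algebra_simps)
qed

lemma binom_step:
  fixes x :: "nat \<Rightarrow> 'a::real_vector"
  shows "(\<Sum>j\<le>Suc k. (real (Suc k choose j) * (-1)^(Suc k - j)) *\<^sub>R x j) =
    (\<Sum>j\<le>k. (real (k choose j) * (-1)^(k - j)) *\<^sub>R x (Suc j)) - (\<Sum>j\<le>k. (real (k choose j) * (-1)^(k - j)) *\<^sub>R x j)"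
proof -
  define A where "A = (\<Sum>j\<le>k. (real (k choose j) * (-1)^(k - j)) *\<^sub>R x (Suc j))"
  define B where "B = (\<Sum>i\<le>k. (real (k choose Suc i) * (-1)^(k - i)) *\<^sub>R x (Suc i))"
  define R where "R = (\<Sum>j\<le>k. (real (k choose j) * (-1)^(k - j)) *\<^sub>R x j)"
  have "(\<Sum>j\<le>Suc k. (real (Suc k choose j) * (-1)^(Suc k - j)) *\<^sub>R x j) =
      (-1)^(Suc k) *\<^sub>R x 0 + (\<Sum>i\<le>k. (real (Suc k choose Suc i) * (-1)^(k - i)) *\<^sub>R x (Suc i))"
    by (subst sum.atMost_Suc_shift) simp
  also have "(\<Sum>i\<le>k. (real (Suc k choose Suc i) * (-1)^(k - i)) *\<^sub>R x (Suc i)) = A + B"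
    unfolding A_def B_def by (simp add: sum.distrib[symmetric] algebra_simps scaleR_add_left)
  finally have L: "(\<Sum>j\<le>Suc k. (real (Suc k choose j) * (-1)^(Suc k - j)) *\<^sub>R x j) = (-1)^(Suc k) *\<^sub>R x 0 + (A + B)" .
  have R2: "R = (-1)^k *\<^sub>R x 0 + (\<Sum>i<k. (real (k choose Suc i) * (-1)^(k - Suc i)) *\<^sub>R x (Suc i))"
    unfolding R_def by (subst sum.atMost_shift) simp
  have "B = (\<Sum>i<k. (real (k choose Suc i) * (-1)^(k - i)) *\<^sub>R x (Suc i))"
    unfolding B_def lessThan_Suc_atMost[symmetric] by (simp add: sum.lessThan_Suc)
  also have "\<dots> = - (\<Sum>i<k. (real (k choose Suc i) * (-1)^(k - Suc i)) *\<^sub>R x (Suc i))"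
  proof -
    have "\<And>i. i < k \<Longrightarrow> (real (k choose Suc i) * (-1)^(k - i)) *\<^sub>R x (Suc i) =
        - ((real (k choose Suc i) * (-1)^(k - Suc i)) *\<^sub>R x (Suc i))"
    proof -
      fix i assume "i < k"
      then have "k - i = Suc (k - Suc i)" by simp
      then show "(real (k choose Suc i) * (-1)^(k - i)) *\<^sub>R x (Suc i) =
        - ((real (k choose Suc i) * (-1)^(k - Suc i)) *\<^sub>R x (Suc i))" by simp
    qed
    then show ?thesis by (simp add: sum_negf[symmetric])
  qed
  finally have "B = - (R - (-1)^k *\<^sub>R x 0)" using R2 by simp
  then have X: "(-1)^(Suc k) *\<^sub>R x 0 + (A + B) = A - R" by (simp add: algebra_simps)
  show ?thesis unfolding A_def[symmetric] R_def[symmetric] by (rule trans[OF L X])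
qed

lemma bpow_Suc': "bpow X (Suc k) = X o\<^sub>L bpow X k"
  by (simp add: bpow_def)

lemma bpow_0': "bpow X 0 = id_blinfun"
  by (simp add: bpow_def)

lemma bpow_binom:
  fixes Z :: "'a::real_normed_vector \<Rightarrow>\<^sub>L 'a" and x :: "nat \<Rightarrow> 'a"
  assumes hZ: "\<And>j. Z (x j) = \<mu> *\<^sub>R (x (Suc j) - x j)" and y: "x 0 = y"
  shows "bpow Z k y = (\<Sum>j\<le>k. (\<mu>^k * real (k choose j) * (-1)^(k - j)) *\<^sub>R x j)"
proof (induction k)
  case 0
  then show ?case using y by (simp add: bpow_0')
next
  case (Suc k)
  have "bpow Z (Suc k) y = Z (\<Sum>j\<le>k. (\<mu>^k * real (k choose j) * (-1)^(k - j)) *\<^sub>R x j)"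
    by (simp add: bpow_Suc' Suc.IH)
  also have "\<dots> = (\<Sum>j\<le>k. (\<mu>^k * real (k choose j) * (-1)^(k - j)) *\<^sub>R (\<mu> *\<^sub>R (x (Suc j) - x j)))"
    by (simp add: blinfun.sum_right blinfun.scaleR_right hZ)
  also have "\<dots> = \<mu>^Suc k *\<^sub>R ((\<Sum>j\<le>k. (real (k choose j) * (-1)^(k - j)) *\<^sub>R x (Suc j)) - (\<Sum>j\<le>k. (real (k choose j) * (-1)^(k - j)) *\<^sub>R x j))"
    by (simp add: scaleR_sum_right sum_subtractf[symmetric] algebra_simps)
  also have "\<dots> = \<mu>^Suc k *\<^sub>R (\<Sum>j\<le>Suc k. (real (Suc k choose j) * (-1)^(Suc k - j)) *\<^sub>R x j)"
    by (simp only: binom_step)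
  also have "\<dots> = (\<Sum>j\<le>Suc k. (\<mu>^Suc k * real (Suc k choose j) * (-1)^(Suc k - j)) *\<^sub>R x j)"
    by (simp only: scaleR_sum_right scaleR_scaleR mult.assoc)
  finally show ?case .
qed

lemma bpow_norm: "norm (bpow (X::'a::real_normed_vector \<Rightarrow>\<^sub>L 'a) k) \<le> norm X ^ k"
proof (induction k)
  case 0 then show ?case by (simp add: bpow_0' norm_blinfun_id_le)
next
  case (Suc k)
  have "norm (bpow X (Suc k)) \<le> norm X * norm (bpow X k)" unfolding bpow_Suc' by (rule norm_blinfun_compose)
  also have "\<dots> \<le> norm X * norm X ^ k" by (rule mult_left_mono[OF Suc.IH]) simp
  finally show ?case by simp
qed

lemma bexp_apply:
  fixes Z :: "'a::banach \<Rightarrow>\<^sub>L 'a" and x :: "nat \<Rightarrow> 'a"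
  assumes hZ: "\<And>j. Z (x j) = \<mu> *\<^sub>R (x (Suc j) - x j)" and y: "x 0 = y"
    and B: "\<And>j. norm (x j) \<le> B"
  shows "bexp Z y = (\<Sum>k. pois \<mu> k *\<^sub>R x k)"
proof -
  have sZ: "summable (\<lambda>k. (1 / fact k) *\<^sub>R bpow Z k)"
  proof (rule summable_norm_cancel, rule summable_comparison_test[OF _ sums_summable[OF poisson0[of "norm Z"]]])
    show "\<exists>N. \<forall>n\<ge>N. norm (norm ((1 / fact n) *\<^sub>R bpow Z n)) \<le> norm Z ^ n / fact n"
      using bpow_norm[of Z] by (auto simp: divide_right_mono)
  qed
  have e1: "bexp Z y = (\<Sum>k. (1 / fact k) *\<^sub>R bpow Z k y)"
    unfolding bexp_def using bounded_linear.suminf[OF blinfun.bounded_linear_left sZ, of y]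
    by (simp add: blinfun.scaleR_left)
  define a where "a i = (\<mu>^i / fact i) *\<^sub>R x i" for i
  define c where "c m = (-\<mu>)^m / fact m" for m
  have e2: "(1 / fact k) *\<^sub>R bpow Z k y = (\<Sum>i\<le>k. c (k - i) *\<^sub>R a i)" for k
  proof -
    have "(1 / fact k) *\<^sub>R bpow Z k y = (\<Sum>j\<le>k. ((1 / fact k) * (\<mu>^k * real (k choose j) * (-1)^(k - j))) *\<^sub>R x j)"
      by (simp add: bpow_binom[OF hZ y] scaleR_sum_right)
    also have "\<dots> = (\<Sum>i\<le>k. c (k - i) *\<^sub>R a i)"
    proof (rule sum.cong[OF refl])
      fix i assume "i \<in> {..k}"
      then have ik: "i \<le> k" by simp
      have "(1 / fact k) * (\<mu>^k * real (k choose i) * (-1)^(k - i)) = c (k - i) * (\<mu>^i / fact i)"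
      proof -
        have "\<mu>^k = \<mu>^i * \<mu>^(k - i)" using power_add[of \<mu> i "k - i"] ik by simp
        moreover have "real (k choose i) = fact k / (fact i * fact (k - i))" by (rule binomial_fact[OF ik])
        moreover have "(-\<mu>)^(k - i) = (-1)^(k - i) * \<mu>^(k - i)" by (rule power_minus)
        ultimately show ?thesis by (simp add: c_def field_simps)
      qed
      then show "((1 / fact k) * (\<mu>^k * real (k choose i) * (-1)^(k - i))) *\<^sub>R x i = c (k - i) *\<^sub>R a i"
        by (simp add: a_def)
    qed
    finally show ?thesis .
  qed
  have sa: "summable (\<lambda>k. norm (a k))"
  proof (rule summable_comparison_test[OF _ summable_mult2[OF sums_summable[OF poisson0[of "\<bar>\<mu>\<bar>"]], of B]])
    show "\<exists>N. \<forall>n\<ge>N. norm (norm (a n)) \<le> \<bar>\<mu>\<bar>^n / fact n * B"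
    proof (intro exI allI impI)
      fix n :: nat
      have "\<bar>\<mu>\<bar>^n * norm (x n) \<le> \<bar>\<mu>\<bar>^n * B" by (rule mult_left_mono[OF B]) simp
      then have "\<bar>\<mu>\<bar>^n * norm (x n) / fact n \<le> \<bar>\<mu>\<bar>^n * B / fact n" by (rule divide_right_mono) simp
      then show "norm (norm (a n)) \<le> \<bar>\<mu>\<bar>^n / fact n * B" by (simp add: a_def power_abs)
    qed
  qed
  have sc: "summable (\<lambda>k. norm (c k))"
    using sums_summable[OF poisson0[of "\<bar>\<mu>\<bar>"]] by (simp add: c_def power_abs)
  have csum: "(\<Sum>k. c k) = exp (-\<mu>)"
    using poisson0[of "-\<mu>"] by (simp add: c_def sums_iff)
  have "(\<lambda>k. (1 / fact k) *\<^sub>R bpow Z k y) sums (exp (-\<mu>) *\<^sub>R (\<Sum>k. a k))"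
    using Cauchy_product_sums_scaleR[OF sa sc] unfolding e2 csum .
  then have "bexp Z y = exp (-\<mu>) *\<^sub>R (\<Sum>k. a k)" using e1 sums_unique by metis
  also have "\<dots> = (\<Sum>k. exp (-\<mu>) *\<^sub>R a k)"
    using suminf_scaleR_right[OF summable_norm_cancel[OF sa]] by simp
  also have "\<dots> = (\<Sum>k. pois \<mu> k *\<^sub>R x k)"
    by (simp add: a_def pois_def)
  finally show ?thesis .
qed

lemma dd_lin:
  fixes a :: "nat \<Rightarrow> 'a::real_normed_vector"
  assumes dd: "\<And>j. norm (a (Suc (Suc j)) - 2 *\<^sub>R a (Suc j) + a j) \<le> q"
  shows "norm ((a (Suc (i + m)) - a (i + m)) - (a (Suc i) - a i)) \<le> real m * q"
proof (induction m)
  case 0 then show ?case by simp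
next
  case (Suc m)
  have "(a (Suc (i + Suc m)) - a (i + Suc m)) - (a (Suc i) - a i) =
     ((a (Suc (i + m)) - a (i + m)) - (a (Suc i) - a i)) + (a (Suc (Suc (i + m))) - 2 *\<^sub>R a (Suc (i + m)) + a (i + m))"
    by (simp add: algebra_simps scaleR_2)
  note eq = this
  have "norm ((a (Suc (i + Suc m)) - a (i + Suc m)) - (a (Suc i) - a i)) \<le>
     norm ((a (Suc (i + m)) - a (i + m)) - (a (Suc i) - a i)) + norm (a (Suc (Suc (i + m))) - 2 *\<^sub>R a (Suc (i + m)) + a (i + m))"
    unfolding eq by (rule norm_triangle_ineq)
  also have "\<dots> \<le> real m * q + q" using Suc.IH dd[of "i + m"] by linarith
  finally show ?case by (simp add: algebra_simps)
qed

lemma dd_up: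
  fixes a :: "nat \<Rightarrow> 'a::real_normed_vector"
  assumes dd: "\<And>j. norm (a (Suc (Suc j)) - 2 *\<^sub>R a (Suc j) + a j) \<le> q"
  shows "norm (a (n + m) - a n - real m *\<^sub>R (a (Suc n) - a n)) \<le> real m * (real m - 1) / 2 * q"
proof (induction m)
  case 0 then show ?case by simp
next
  case (Suc m)
  have "a (n + Suc m) - a n - real (Suc m) *\<^sub>R (a (Suc n) - a n) =
     (a (n + m) - a n - real m *\<^sub>R (a (Suc n) - a n)) + ((a (Suc (n + m)) - a (n + m)) - (a (Suc n) - a n))"
    by (simp add: algebra_simps)
  note eq = this
  have "norm (a (n + Suc m) - a n - real (Suc m) *\<^sub>R (a (Suc n) - a n)) \<le>
     norm (a (n + m) - a n - real m *\<^sub>R (a (Suc n) - a n)) + norm ((a (Suc (n + m)) - a (n + m)) - (a (Suc n) - a n))"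
    unfolding eq by (rule norm_triangle_ineq)
  also have "\<dots> \<le> real m * (real m - 1) / 2 * q + real m * q" using Suc.IH dd_lin[of a q, OF dd, of n m] by linarith
  also have "\<dots> = real (Suc m) * (real (Suc m) - 1) / 2 * q" by (simp add: field_simps)
  finally show ?case .
qed

lemma dd_down:
  fixes a :: "nat \<Rightarrow> 'a::real_normed_vector"
  assumes dd: "\<And>j. norm (a (Suc (Suc j)) - 2 *\<^sub>R a (Suc j) + a j) \<le> q"
  shows "m \<le> n \<Longrightarrow> norm (a (n - m) - a n + real m *\<^sub>R (a (Suc n) - a n)) \<le> real m * (real m + 1) / 2 * q"
proof (induction m)
  case 0 then show ?case by simp
next
  case (Suc m)
  define i where "i = n - Suc m"
  have ni: "n = i + Suc m" "n - m = Suc i" "n - Suc m = i" using Suc.prems by (auto simp: i_def)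
  have eq: "a (n - Suc m) - a n + real (Suc m) *\<^sub>R (a (Suc n) - a n) =
     (a (n - m) - a n + real m *\<^sub>R (a (Suc n) - a n)) + ((a (Suc n) - a n) - (a (Suc i) - a i))"
    unfolding ni(2,3) by (simp add: algebra_simps)
  have "norm (a (n - Suc m) - a n + real (Suc m) *\<^sub>R (a (Suc n) - a n)) \<le>
     norm (a (n - m) - a n + real m *\<^sub>R (a (Suc n) - a n)) + norm ((a (Suc n) - a n) - (a (Suc i) - a i))"
    unfolding eq by (rule norm_triangle_ineq)
  also have "\<dots> \<le> real m * (real m + 1) / 2 * q + real (Suc m) * q"
  proof -
    have "norm ((a (Suc n) - a n) - (a (Suc i) - a i)) \<le> real (Suc m) * q"
      using dd_lin[of a q, OF dd, of i "Suc m"] unfolding ni(1)[symmetric] .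
    then show ?thesis using Suc.IH Suc.prems by simp
  qed
  also have "\<dots> = real (Suc m) * (real (Suc m) + 1) / 2 * q" by (simp add: field_simps)
  finally show ?case .
qed

lemma dd_quad:
  fixes a :: "nat \<Rightarrow> 'a::real_normed_vector"
  assumes dd: "\<And>j. norm (a (Suc (Suc j)) - 2 *\<^sub>R a (Suc j) + a j) \<le> q"
  shows "norm (a k - a n - (real k - real n) *\<^sub>R (a (Suc n) - a n)) \<le> ((real k - real n)^2 - (real k - real n)) / 2 * q"
proof (cases "n \<le> k")
  case True
  then obtain m where k: "k = n + m" using le_Suc_ex by blast
  show ?thesis using dd_up[of a q, OF dd, of n m] by (simp add: k power2_eq_square algebra_simps)
next
  case False
  define m where "m = n - k"
  have k: "k = n - m" "m \<le> n" using False by (auto simp: m_def)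
  have "real k - real n = - real m" using k by simp
  then show ?thesis using dd_down[of a q, OF dd k(2)] k by (simp add: power2_eq_square algebra_simps)
qed

lemma vd_quot:
  fixes F :: "real \<Rightarrow> 'a::real_normed_vector"
  assumes d: "(F has_vector_derivative v) (at x within {x..b})" and xb: "x < b"
  shows "((\<lambda>s. (1 / s) *\<^sub>R (F (x + s) - F x)) \<longlongrightarrow> v) (at_right 0)"
proof -
  have "((\<lambda>y. (1 / norm (y - x)) *\<^sub>R (F y - (F x + (y - x) *\<^sub>R v))) \<longlongrightarrow> 0) (at x within {x..b})"
    using d unfolding has_vector_derivative_def has_derivative_within by auto
  show ?thesis
    unfolding tendsto_iff
  proof (intro allI impI)
    fix e :: real assume e: "e > 0"
    from tendstoD[OF \<open>(_ \<longlongrightarrow> 0) _\<close> e] obtain d where d: "d > 0"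
      "\<forall>y\<in>{x..b}. y \<noteq> x \<and> dist y x < d \<longrightarrow> dist ((1 / norm (y - x)) *\<^sub>R (F y - (F x + (y - x) *\<^sub>R v))) 0 < e"
      unfolding eventually_at by auto
    show "\<forall>\<^sub>F s in at_right 0. dist ((1 / s) *\<^sub>R (F (x + s) - F x)) v < e"
      unfolding eventually_at_right_field
    proof (intro exI[of _ "min d (b - x)"] conjI allI impI)
      fix s :: real assume s: "0 < s" "s < min d (b - x)"
      have d1: "dist ((1 / norm ((x + s) - x)) *\<^sub>R (F (x + s) - (F x + ((x + s) - x) *\<^sub>R v))) 0 < e"
        using d(2)[rule_format, of "x + s"] s by (auto simp: dist_real_def)
      have eq: "(1 / norm ((x + s) - x)) *\<^sub>R (F (x + s) - (F x + ((x + s) - x) *\<^sub>R v)) = (1 / s) *\<^sub>R (F (x + s) - F x) - v"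
        using s by (simp add: algebra_simps)
      show "dist ((1 / s) *\<^sub>R (F (x + s) - F x)) v < e" using d1 unfolding eq by (simp add: dist_norm)
    qed (use d xb in auto)
  qed
qed

lemma gen_scale:
  assumes g: "generator U G Dom" and z: "z \<in> Dom"
  shows "c *\<^sub>R z \<in> Dom"
proof -
  have "((\<lambda>t. c *\<^sub>R ((1 / t) *\<^sub>R (U t z - z))) \<longlongrightarrow> c *\<^sub>R G z) (at_right 0)"
    by (intro tendsto_intros gen_lim[OF g z])
  moreover have "(\<lambda>t. c *\<^sub>R ((1 / t) *\<^sub>R (U t z - z))) = (\<lambda>t. (1 / t) *\<^sub>R (U t (c *\<^sub>R z) - c *\<^sub>R z))"
    by (auto simp: blinfun.scaleR_right algebra_simps)
  ultimately have lim: "((\<lambda>t. (1 / t) *\<^sub>R (U t (c *\<^sub>R z) - c *\<^sub>R z)) \<longlongrightarrow> c *\<^sub>R G z) (at_right 0)"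
    by simp
  show ?thesis by (rule gen_memI(1)[OF g lim])
qed

lemma sg_integrable:
  fixes U :: "real \<Rightarrow> ('a::banach \<Rightarrow>\<^sub>L 'a)"
  assumes sg: "C0_semigroup U"
  shows "(\<lambda>r. U r x) integrable_on {0..u}"
  using sg unfolding C0_semigroup_def
  by (intro integrable_continuous_interval) (auto intro: continuous_on_subset)

lemma sg_avg:
  fixes U :: "real \<Rightarrow> ('a::banach \<Rightarrow>\<^sub>L 'a)"
  assumes sg: "C0_semigroup U" and g: "generator U G Dom" and \<tau>: "\<tau> > 0"
  shows "integral {0..\<tau>} (\<lambda>r. U r x) \<in> Dom"
proof -
  define f where "f r = U r x" for r
  define F where "F u = integral {0..u} f" for u
  have cont: "continuous_on {0..} f" using sg unfolding C0_semigroup_def f_def by auto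
  have shift: "U s (F \<tau>) = F (\<tau> + s) - F s" if s: "s > 0" for s
  proof -
    have "U s (F \<tau>) = integral {0..\<tau>} (blinfun_apply (U s) \<circ> f)"
      unfolding F_def f_def
      by (rule integral_linear[symmetric, OF sg_integrable[OF sg] blinfun.bounded_linear_right])
    also have "\<dots> = integral {0..\<tau>} (f \<circ> (+) s)"
      by (rule integral_cong) (use s sg_add[OF sg] in \<open>auto simp: f_def\<close>)
    also have "\<dots> = integral {s..\<tau> + s} f"
      by (simp add: integral_shift_Icc_real)
    also have "\<dots> = F (\<tau> + s) - F s"
    proof -
      have "integral {0..s} f + integral {s..\<tau> + s} f = integral {0..\<tau> + s} f"
        using s \<tau> by (intro Henstock_Kurzweil_Integration.integral_combine) (auto simp: f_def[abs_def] intro: sg_integrable[OF sg])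
      then show ?thesis by (simp add: F_def algebra_simps)
    qed
    finally show ?thesis .
  qed
  have F0: "F 0 = 0" by (simp add: F_def)
  have der: "(F has_vector_derivative f t) (at t within {t..t + 1})" if t: "t \<ge> 0" for t
  proof -
    have "(F has_vector_derivative f t) (at t within {0..t + 1})"
      unfolding F_def by (rule integral_has_vector_derivative) (use t in \<open>auto intro: continuous_on_subset[OF cont]\<close>)
    then show ?thesis by (rule has_vector_derivative_within_subset) (use t in auto)
  qed
  have l1: "((\<lambda>s. (1 / s) *\<^sub>R (F (\<tau> + s) - F \<tau>)) \<longlongrightarrow> f \<tau>) (at_right 0)"
    by (rule vd_quot[OF der]) (use \<tau> in auto)
  have l2: "((\<lambda>s. (1 / s) *\<^sub>R (F (0 + s) - F 0)) \<longlongrightarrow> f 0) (at_right 0)"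
    by (rule vd_quot[OF der]) auto
  have "((\<lambda>s. (1 / s) *\<^sub>R (F (\<tau> + s) - F \<tau>) - (1 / s) *\<^sub>R (F (0 + s) - F 0)) \<longlongrightarrow> f \<tau> - f 0) (at_right 0)"
    by (rule tendsto_diff[OF l1 l2])
  moreover have "\<forall>\<^sub>F s in at_right 0. (1 / s) *\<^sub>R (F (\<tau> + s) - F \<tau>) - (1 / s) *\<^sub>R (F (0 + s) - F 0) = (1 / s) *\<^sub>R (U s (F \<tau>) - F \<tau>)"
    using eventually_at_right_less[of 0]
    by eventually_elim (simp add: shift F0 algebra_simps)
  ultimately have lim: "((\<lambda>s. (1 / s) *\<^sub>R (U s (F \<tau>) - F \<tau>)) \<longlongrightarrow> f \<tau> - f 0) (at_right 0)"
    by (rule Lim_transform_eventually)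
  have "F \<tau> \<in> Dom" by (rule gen_memI(1)[OF g lim])
  then show ?thesis by (simp add: F_def f_def[abs_def])
qed

lemma sg_avg_lim:
  fixes U :: "real \<Rightarrow> ('a::banach \<Rightarrow>\<^sub>L 'a)"
  assumes sg: "C0_semigroup U"
  shows "((\<lambda>t. (1 / t) *\<^sub>R integral {0..t} (\<lambda>r. U r x)) \<longlongrightarrow> x) (at_right 0)"
proof -
  define f where "f r = U r x" for r
  define F where "F u = integral {0..u} f" for u
  have cont: "continuous_on {0..} f" using sg unfolding C0_semigroup_def f_def by auto
  have "(F has_vector_derivative f 0) (at 0 within {0..1})"
    unfolding F_def by (rule integral_has_vector_derivative) (auto intro: continuous_on_subset[OF cont])
  then have "((\<lambda>s. (1 / s) *\<^sub>R (F (0 + s) - F 0)) \<longlongrightarrow> f 0) (at_right 0)"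
    by (rule vd_quot) auto
  then show ?thesis using sg_zero[OF sg] by (simp add: F_def f_def[abs_def])
qed

context setting begin

lemma SP_vec: "s \<ge> 0 \<Longrightarrow> norm (S s (P z)) \<le> norm z"
proof -
  assume s: "s \<ge> 0"
  define v where "v t = (1 / t) *\<^sub>R integral {0..t} (\<lambda>r. S r z)" for t
  have lv: "(v \<longlongrightarrow> z) (at_right 0)" unfolding v_def by (rule sg_avg_lim[OF S])
  have l1: "((\<lambda>t. norm (S s (P (v t)))) \<longlongrightarrow> norm (S s (P z))) (at_right 0)"
    by (intro tendsto_norm blinfun.tendsto[OF tendsto_const] lv)
  have l2: "((\<lambda>t. norm (v t)) \<longlongrightarrow> norm z) (at_right 0)" by (intro tendsto_norm lv)
  have ev: "\<forall>\<^sub>F t in at_right 0. norm (S s (P (v t))) \<le> norm (v t)"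
    using eventually_at_right_less[of 0]
  proof eventually_elim
    case (elim t)
    have "v t \<in> {x. P x \<in> D}" unfolding v_def
      by (rule gen_scale[OF genS sg_avg[OF S genS elim]])
    then have "P (v t) \<in> V" by (auto simp: V_def)
    then have "norm (S s (P (v t))) \<le> norm (P (v t))" using S_contr s by blast
    also have "\<dots> \<le> norm (v t)" by (rule Pv)
    finally show ?case .
  qed
  show ?thesis using tendsto_le[OF _ l2 l1 ev] by simp
qed

lemma SP_norm: "s \<ge> 0 \<Longrightarrow> norm (S s o\<^sub>L P) \<le> 1"
  by (rule norm_blinfun_bound) (auto simp: SP_vec)

end

lemma sums_norm_le:
  fixes f :: "nat \<Rightarrow> 'a::banach"
  assumes f: "f sums s" and fg: "\<And>k. norm (f k) \<le> g k" and g: "g sums t"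
  shows "norm s \<le> t"
proof -
  have sn: "summable (\<lambda>k. norm (f k))"
    by (rule summable_comparison_test[OF _ sums_summable[OF g]]) (use fg in auto)
  have "norm s = norm (suminf f)" using f sums_unique by metis
  also have "\<dots> \<le> (\<Sum>k. norm (f k))" by (rule summable_norm[OF sn])
  also have "\<dots> \<le> (\<Sum>k. g k)" by (rule suminf_le[OF fg sn sums_summable[OF g]])
  also have "\<dots> = t" using g sums_unique by metis
  finally show ?thesis .
qed

context setting begin

lemma main_est:
  assumes n: "n \<ge> 1" and x1: "P x \<in> D" and x2: "P (L (P x)) \<in> D"
  shows "norm (bexp (real n *\<^sub>R (P o\<^sub>L (T (1 / real n) - id_blinfun) o\<^sub>L P)) (P x) - S 1 (P x))
     \<le> 1 / (2 * real n) * (b\<^sup>2 * norm x + norm (L (P (L (P x)))))"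
proof -
  define h where "h = 1 / real n"
  define \<mu> where "\<mu> = real n"
  have h: "h > 0" using n by (simp add: h_def)
  have hh: "h \<ge> 0" using h by simp
  define y where "y = P x"
  have yV: "y \<in> V" using x1 by (simp add: V_def y_def)
  have Ay: "A y = P (L (P x))" by (simp add: y_def)
  have AyV: "A y \<in> V" unfolding Ay using x2 by (simp add: V_def)
  have AAy: "A (A y) = P (L (P (L (P x))))" unfolding Ay by simp
  define Z where "Z = real n *\<^sub>R (P o\<^sub>L (T (1 / real n) - id_blinfun) o\<^sub>L P)"
  define xs where "xs j = bpow (C h) j y" for j
  have xs0: "xs 0 = y" by (simp add: xs_def bpow_0)
  have xsS: "xs (Suc j) = P (T h (P (xs j)))" for j by (simp add: xs_def bpow_Suc C_def)
  have xsP: "P (xs j) = xs j" for j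
  proof (cases j)
    case 0 then show ?thesis using yV by (simp add: xs0 V_def)
  next
    case (Suc i) then show ?thesis by (simp add: xsS)
  qed
  have Zap: "Z v = real n *\<^sub>R (P (T h (P v)) - P (P v))" for v
    unfolding Z_def h_def
    by (simp only: blinfun.scaleR_left blinfun_apply_blinfun_compose blinfun.diff_left
        blinfun.diff_right blinfun_apply_id_blinfun)
  have hZ: "Z (xs j) = \<mu> *\<^sub>R (xs (Suc j) - xs j)" for j
    unfolding Zap xsS \<mu>_def using xsP[of j] by simp
  have xsB: "norm (xs j) \<le> norm y" for j
  proof (induction j)
    case 0 then show ?case by (simp add: xs0)
  next
    case (Suc j)
    have "xs (Suc j) = C h (xs j)" by (simp add: xs_def bpow_Suc)
    then show ?case using opnorm_le[OF C_norm[OF hh], of "xs j"] Suc.IH by simp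
  qed
  have bexp_eq: "bexp Z y = (\<Sum>k. pois \<mu> k *\<^sub>R xs k)"
    by (rule bexp_apply[OF hZ xs0 xsB])
  have pn: "pois \<mu> k \<ge> 0" for k by (simp add: pois_nonneg \<mu>_def)
  have s1: "(\<lambda>k. pois \<mu> k *\<^sub>R xs k) sums bexp Z y"
  proof -
    have "summable (\<lambda>k. pois \<mu> k *\<^sub>R xs k)"
    proof (rule summable_norm_cancel, rule summable_comparison_test[OF _ summable_mult2[OF sums_summable[OF pois_sums0[of \<mu>]], of "norm y"]])
      show "\<exists>N. \<forall>k\<ge>N. norm (norm (pois \<mu> k *\<^sub>R xs k)) \<le> pois \<mu> k * norm y"
        using xsB pn by (auto intro!: mult_left_mono)
    qed
    then show ?thesis unfolding bexp_eq by (rule summable_sums)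
  qed
  define a where "a k = S (real k * h) y" for k
  have an: "a n = S 1 y" using n by (simp add: a_def h_def)
  define q where "q = h\<^sup>2 * norm (A (A y))"
  define w2 where "w2 = S h (S h y) - 2 *\<^sub>R S h y + y"
  have w2V: "w2 \<in> V"
  proof -
    have "S h (S h y) \<in> V" "S h y \<in> V" using S_V[OF S_V[OF yV hh] hh] S_V[OF yV hh] by auto
    then have "1 *\<^sub>R S h (S h y) + (-2) *\<^sub>R S h y \<in> V" by (rule V_lin(1))
    then have "1 *\<^sub>R (1 *\<^sub>R S h (S h y) + (-2) *\<^sub>R S h y) + 1 *\<^sub>R y \<in> V" using yV by (rule V_lin(1))
    then show ?thesis by (simp add: w2_def)
  qed
  have w2n: "norm w2 \<le> q" unfolding w2_def q_def by (rule S_second[OF yV AyV hh])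
  have dd: "norm (a (Suc (Suc j)) - 2 *\<^sub>R a (Suc j) + a j) \<le> q" for j
  proof -
    have t0: "real j * h \<ge> 0" using hh by simp
    have e1: "S (real (Suc (Suc j)) * h) = S (real j * h + (h + h))" by (simp add: algebra_simps)
    have e2: "S (real (Suc j) * h) = S (real j * h + h)" by (simp add: algebra_simps)
    have "a (Suc (Suc j)) = S (real j * h) (S h (S h y))"
      unfolding a_def e1 using sg_add[OF S t0, of "h + h" y] sg_add[OF S hh hh, of y] hh by simp
    moreover have "a (Suc j) = S (real j * h) (S h y)"
      unfolding a_def e2 using sg_add[OF S t0 hh, of y] by simp
    ultimately have "a (Suc (Suc j)) - 2 *\<^sub>R a (Suc j) + a j = S (real j * h) w2"
      by (simp add: a_def w2_def blinfun.diff_right blinfun.add_right blinfun.scaleR_right)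
    then show ?thesis using S_contr[OF w2V t0] w2n by simp
  qed
  define d where "d = a (Suc n) - a n"
  define c0 where "c0 = b\<^sup>2 * h\<^sup>2 / 2 * norm y"
  define f where "f k = pois \<mu> k *\<^sub>R xs k - pois \<mu> k *\<^sub>R a n - (pois \<mu> k * (real k - \<mu>)) *\<^sub>R d" for k
  have fs: "f sums (bexp Z y - a n)"
  proof -
    have s2: "(\<lambda>k. pois \<mu> k *\<^sub>R a n) sums (1 *\<^sub>R a n)" by (rule sums_scaleR_left[OF pois_sums0])
    have "(\<lambda>k. (real k - \<mu>) * pois \<mu> k) sums 0" by (rule pois_sums_lin)
    then have "(\<lambda>k. pois \<mu> k * (real k - \<mu>)) sums 0" by (simp add: mult.commute)
    then have s3: "(\<lambda>k. (pois \<mu> k * (real k - \<mu>)) *\<^sub>R d) sums (0 *\<^sub>R d)" by (rule sums_scaleR_left)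
    have "f sums (bexp Z y - 1 *\<^sub>R a n - 0 *\<^sub>R d)" unfolding f_def by (intro sums_diff s1 s2 s3)
    then show ?thesis by simp
  qed
  define g where "g k = (real k * pois \<mu> k) * c0 + (((real k - \<mu>)^2 - (real k - \<mu>)) * pois \<mu> k) * (q / 2)" for k
  have gs: "g sums (\<mu> * c0 + \<mu> * (q / 2))"
    unfolding g_def by (intro sums_add sums_mult2 pois_sums1 pois_sums_c)
  have fg: "norm (f k) \<le> g k" for k
  proof -
    have "f k = pois \<mu> k *\<^sub>R (xs k - a k) + pois \<mu> k *\<^sub>R (a k - a n - (real k - real n) *\<^sub>R (a (Suc n) - a n))"
      by (simp add: f_def d_def \<mu>_def algebra_simps)
    then have "norm (f k) \<le> pois \<mu> k * norm (xs k - a k) + pois \<mu> k * norm (a k - a n - (real k - real n) *\<^sub>R (a (Suc n) - a n))"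
      using norm_triangle_ineq[of "pois \<mu> k *\<^sub>R (xs k - a k)" "pois \<mu> k *\<^sub>R (a k - a n - (real k - real n) *\<^sub>R (a (Suc n) - a n))"] pn[of k]
      by simp
    also have "\<dots> \<le> pois \<mu> k * (real k * c0) + pois \<mu> k * (((real k - real n)^2 - (real k - real n)) / 2 * q)"
    proof (rule add_mono; rule mult_left_mono[OF _ pn])
      show "norm (xs k - a k) \<le> real k * c0"
        using C_iter[OF yV hh, of k] by (simp add: xs_def a_def c0_def mult.assoc)
      show "norm (a k - a n - (real k - real n) *\<^sub>R (a (Suc n) - a n)) \<le> ((real k - real n)^2 - (real k - real n)) / 2 * q"
        by (rule dd_quad[of a q, OF dd])
    qed
    also have "\<dots> = g k" by (simp add: g_def \<mu>_def field_simps)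
    finally show ?thesis .
  qed
  have "norm (bexp Z y - a n) \<le> \<mu> * c0 + \<mu> * (q / 2)" by (rule sums_norm_le[OF fs fg gs])
  also have "\<mu> * c0 + \<mu> * (q / 2) = 1 / (2 * real n) * (b\<^sup>2 * norm y + norm (A (A y)))"
    using n by (simp add: \<mu>_def c0_def q_def h_def power2_eq_square field_simps)
  also have "\<dots> \<le> 1 / (2 * real n) * (b\<^sup>2 * norm x + norm (L (P (L (P x)))))"
  proof (rule mult_left_mono)
    have "norm y \<le> norm x" unfolding y_def by (rule Pv)
    moreover have "norm (A (A y)) \<le> norm (L (P (L (P x))))" unfolding AAy by (rule Pv)
    ultimately show "b\<^sup>2 * norm y + norm (A (A y)) \<le> b\<^sup>2 * norm x + norm (L (P (L (P x))))"
      by (simp add: add_mono mult_left_mono)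
  qed simp
  finally show ?thesis unfolding an by (simp add: Z_def y_def)
qed

end

theorem lemma5p6:
  fixes T S :: "real \<Rightarrow> ('a::banach \<Rightarrow>\<^sub>L 'a)"
    and L :: "'a \<Rightarrow> 'a" and D :: "'a set"
    and M P :: "'a \<Rightarrow>\<^sub>L 'a" and \<delta> b :: real
  assumes T: "C0_contraction_semigroup T" and gen: "generator T L D"
    and M: "norm M \<le> 1"
    and P: "P o\<^sub>L P = P"
    and \<delta>: "0 < \<delta>" "\<delta> < 1"
    and MP: "\<And>n::nat. n \<ge> 1 \<Longrightarrow> norm (bpow M n - P) \<le> \<delta> ^ n"
    and b: "b \<ge> 0"
    and b1: "\<And>t. t \<ge> 0 \<Longrightarrow> norm (P o\<^sub>L T t o\<^sub>L (id_blinfun - P)) \<le> t * b"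
    and b2: "\<And>t. t \<ge> 0 \<Longrightarrow> norm ((id_blinfun - P) o\<^sub>L T t o\<^sub>L P) \<le> t * b"
    and S: "C0_semigroup S"
    and genS: "generator S (\<lambda>x. P (L (P x))) {x. P x \<in> D}"
  shows "bdd_above ((\<lambda>s. norm (S s o\<^sub>L P)) ` {0..1}) \<and>
    (\<forall>n::nat. \<forall>x. n \<ge> 1 \<longrightarrow> P x \<in> D \<longrightarrow> P (L (P x)) \<in> D \<longrightarrow>
       norm (bexp (real n *\<^sub>R (P o\<^sub>L (T (1 / real n) - id_blinfun) o\<^sub>L P)) (P x) - S 1 (P x))
       \<le> (SUP s\<in>{0..1}. norm (S s o\<^sub>L P)) / (2 * real n)
          * (b\<^sup>2 * norm x + norm (L (P (L (P x))))))"
proof -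
  have Pn: "norm P \<le> 1"
  proof (rule ccontr)
    assume "\<not> norm P \<le> 1"
    then have e: "norm P - 1 > 0" by simp
    have "(\<lambda>m. \<delta> ^ m) \<longlonglongrightarrow> 0" by (rule LIMSEQ_power_zero) (use \<delta> in simp)
    then obtain N where N: "\<And>m. m \<ge> N \<Longrightarrow> norm (\<delta> ^ m - 0) < norm P - 1"
      using LIMSEQ_D[OF _ e] by blast
    define m where "m = max N 1"
    have m1: "m \<ge> 1" and mN: "m \<ge> N" by (auto simp: m_def)
    have "norm (bpow M m) \<le> norm M ^ m" by (rule bpow_norm)
    also have "\<dots> \<le> 1" using M by (simp add: power_le_one)
    finally have bm: "norm (bpow M m) \<le> 1" .
    have "norm P \<le> norm (bpow M m) + norm (bpow M m - P)"
      using norm_triangle_ineq4[of "bpow M m" "bpow M m - P"] by simp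
    also have "\<dots> \<le> 1 + \<delta> ^ m" using bm MP[OF m1] by simp
    finally have "norm P \<le> 1 + \<delta> ^ m" .
    moreover have "\<delta> ^ m < norm P - 1" using N[OF mN] \<delta> by simp
    ultimately show False by simp
  qed
  interpret setting T S L D P b
    using T gen P Pn b b1 b2 S genS by unfold_locales auto
  have bdd: "bdd_above ((\<lambda>s. norm (S s o\<^sub>L P)) ` {0..1})"
    by (rule bdd_aboveI2[of _ _ 1]) (auto intro: SP_norm)
  define K where "K = (SUP s\<in>{0..1}. norm (S s o\<^sub>L P))"
  have S0P: "S 0 o\<^sub>L P = P"
    using S unfolding C0_semigroup_def by (auto intro: blinfun_eqI)
  have KP: "norm P \<le> K"
  proof -
    have "norm (S 0 o\<^sub>L P) \<le> K" unfolding K_def by (rule cSUP_upper[OF _ bdd]) auto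
    then show ?thesis by (simp add: S0P)
  qed
  show ?thesis
  proof (intro conjI bdd allI impI)
    fix n :: nat and x assume n: "n \<ge> 1" and x1: "P x \<in> D" and x2: "P (L (P x)) \<in> D"
    define Q where "Q = b\<^sup>2 * norm x + norm (L (P (L (P x))))"
    have Q0: "Q \<ge> 0" by (simp add: Q_def)
    have n0: "real n > 0" using n by simp
    have "norm (bexp (real n *\<^sub>R (P o\<^sub>L (T (1 / real n) - id_blinfun) o\<^sub>L P)) (P x) - S 1 (P x))
       \<le> K / (2 * real n) * Q"
    proof (cases "P x = 0")
      case True
      have "0 \<le> K" using KP norm_ge_zero order_trans by blast
      then have "0 \<le> K / (2 * real n) * Q" using Q0 n0 by simp
      moreover have "bexp (real n *\<^sub>R (P o\<^sub>L (T (1 / real n) - id_blinfun) o\<^sub>L P)) (P x) - S 1 (P x) = 0"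
        unfolding True by (simp add: blinfun.zero_right)
      ultimately show ?thesis by simp
    next
      case False
      then have "P \<noteq> 0" by auto
      then have Pp: "norm P > 0" by simp
      have "norm P \<le> norm P * norm P" using norm_blinfun_compose[of P P] P by simp
      then have "1 \<le> norm P" using Pp by simp
      then have K1: "1 \<le> K" using KP by simp
      have "norm (bexp (real n *\<^sub>R (P o\<^sub>L (T (1 / real n) - id_blinfun) o\<^sub>L P)) (P x) - S 1 (P x)) \<le> 1 / (2 * real n) * Q"
        unfolding Q_def by (rule main_est[OF n x1 x2])
      also have "\<dots> \<le> K / (2 * real n) * Q"
        by (rule mult_right_mono[OF _ Q0]) (use K1 n0 in \<open>simp add: divide_right_mono\<close>)
      finally show ?thesis .
    qed
    then show "norm (bexp (real n *\<^sub>R (P o\<^sub>L (T (1 / real n) - id_blinfun) o\<^sub>L P)) (P x) - S 1 (P x))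
       \<le> (SUP s\<in>{0..1}. norm (S s o\<^sub>L P)) / (2 * real n) * (b\<^sup>2 * norm x + norm (L (P (L (P x)))))"
      by (simp only: K_def Q_def)
  qed
qed

end
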